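(* Let $\lambda_1,\lambda_2\in P^+$. Then $a^{\lambda_1+\lambda_2}_{\lambda_1,\lambda_2}=1$, and $a^{\tau}_{\lambda_1,\lambda_2}=0$ for every $\tau\in P^+$ with $\tau\not\le\lambda_1+\lambda_2$.
   Context: Let $\mathfrak{sl}_n=\mathfrak n^+\oplus\mathfrak h\oplus\mathfrak n^-$ with simple roots $\alpha_1,\dots,\alpha_{n-1}$, $R^+$ the positive roots, $P^+$ the dominant integral weights, $V(\tau)$ the simple module of highest weight $\tau$; for $\alpha\in R^+$ fix an $\mathfrak{sl}_2$-triple $e_\alpha,f_\alpha,h_\alpha$ with $f_\alpha\in\mathfrak g_{-\alpha}$. The partial order is $\tau\le\mu$ iff $\mu-\tau\in\sum_i\mathbb Z_{\ge0}\alpha_i$. The current algebra $\mathfrak{sl}_n\otimes\mathbb C[t]$ has bracket $[x\otimes p,y\otimes q]=[x,y]\otimes pq$. For $\lambda_1,\lambda_2\in P^+$ with $\lambda=\lambda_1+\lambda_2$, $F_{\lambda_1,\lambda_2}$ is the $\mathfrak{sl}_n\otimes\mathbb C[t]$-module generated by $\mathbb 1$ subject to $(\mathfrak n^+\otimes\mathbb C[t]).\mathbb 1=0$, $(\mathfrak h\otimes t\mathbb C[t]).\mathbb 1=0$, $(\mathfrak n^-\otimes t^2\mathbb C[t]).\mathbb 1=0$, $(h\otimes1).\mathbb 1=\lambda(h)\mathbb 1$ ($h\in\mathfrak h$), and for all $\alpha\in R^+$: $(f_\alpha\otimes1)^{\lambda(h_\alpha)+1}.\mathbb 1=0$, $(f_\alpha\otimes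 t)^{\min\{\lambda_1(h_\alpha),\lambda_2(h_\alpha)\}+1}.\mathbb 1=0$. It is a finite-dimensional $\mathfrak{sl}_n$-module and $a^\tau_{\lambda_1,\lambda_2}:=\dim\operatorname{Hom}_{\mathfrak{sl}_n}(F_{\lambda_1,\lambda_2},V(\tau))$. *)

theory Defs
  imports "Jordan_Normal_Form.Matrix"
begin

text \<open>sl_n realised as traceless complex n x n matrices (indices 0..n-1).
  Simple roots alpha_i (i < n-1): h maps to h(i,i) - h(i+1,i+1).
  Positive roots: eps_i - eps_j for i < j < n, with e = E_ij, f = E_ji, h = E_ii - E_jj.
  Dominant integral weights: lam :: nat => nat, lam i = lam(h_{alpha_i}) for i < n-1
  (coordinates w.r.t. fundamental weights; entries with i >= n-1 are irrelevant).\<close>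

definition mtrace :: "complex mat \<Rightarrow> complex" where
  "mtrace x = (\<Sum>i<dim_row x. x $$ (i,i))"

definition sl :: "nat \<Rightarrow> complex mat set" where
  "sl n = {x \<in> carrier_mat n n. mtrace x = 0}"

definition npos :: "nat \<Rightarrow> complex mat set" where
  "npos n = {x \<in> carrier_mat n n. \<forall>i<n. \<forall>j<n. j \<le> i \<longrightarrow> x $$ (i,j) = 0}"

definition nneg :: "nat \<Rightarrow> complex mat set" where
  "nneg n = {x \<in> carrier_mat n n. \<forall>i<n. \<forall>j<n. i \<le> j \<longrightarrow> x $$ (i,j) = 0}"

definition cartan :: "nat \<Rightarrow> complex mat set" where
  "cartan n = {x \<in> sl n. \<forall>i<n. \<forall>j<n. i \<noteq> j \<longrightarrow> x $$ (i,j) = 0}"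

definition Emat :: "nat \<Rightarrow> nat \<Rightarrow> nat \<Rightarrow> complex mat" where
  "Emat n i j = mat n n (\<lambda>(a,b). if a = i \<and> b = j then 1 else 0)"

definition f_root :: "nat \<Rightarrow> nat \<Rightarrow> nat \<Rightarrow> complex mat" where
  "f_root n i j = Emat n j i"

definition h_root :: "nat \<Rightarrow> nat \<Rightarrow> nat \<Rightarrow> complex mat" where
  "h_root n i j = Emat n i i - Emat n j j"

text \<open>Evaluation of the weight sum_i lam_i omega_i on h in the Cartan subalgebra,
  where omega_i(h) = h(0,0) + ... + h(i,i).\<close>
definition weight_eval :: "nat \<Rightarrow> (nat \<Rightarrow> nat) \<Rightarrow> complex mat \<Rightarrow> complex" where
  "weight_eval n lam h = (\<Sum>i<n-1. of_nat (lam i) * (\<Sum>k\<le>i. h $$ (k,k)))"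

definition weight_le :: "nat \<Rightarrow> (nat \<Rightarrow> nat) \<Rightarrow> (nat \<Rightarrow> nat) \<Rightarrow> bool" where
  "weight_le n tau mu = (\<exists>c :: nat \<Rightarrow> nat. \<forall>h\<in>cartan n.
      weight_eval n mu h - weight_eval n tau h
        = (\<Sum>i<n-1. of_nat (c i) * (h $$ (i,i) - h $$ (i+1,i+1))))"

text \<open>A d-dimensional representation of the current algebra sl_n (x) C[t]:
  rho x k is the action of x (x) t^k (these span the current algebra).\<close>
definition current_rep :: "nat \<Rightarrow> nat \<Rightarrow> (complex mat \<Rightarrow> nat \<Rightarrow> complex mat) \<Rightarrow> bool" where
  "current_rep n d rho =
    ((\<forall>x\<in>sl n. \<forall>k. rho x k \<in> carrier_mat d d) \<and>
     (\<forall>x\<in>sl n. \<forall>y\<in>sl n. \<forall>a b k. rho (a \<cdot>\<^sub>m x + b \<cdot>\<^sub>m y) k = a \<cdot>\<^sub>m rho x k + b \<cdot>\<^sub>m rho y k) \<and>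
     (\<forall>x\<in>sl n. \<forall>y\<in>sl n. \<forall>k l.
        rho x k * rho y l - rho y l * rho x k = rho (x * y - y * x) (k + l)))"

definition sl_rep :: "nat \<Rightarrow> nat \<Rightarrow> (complex mat \<Rightarrow> complex mat) \<Rightarrow> bool" where
  "sl_rep n d sigma =
    ((\<forall>x\<in>sl n. sigma x \<in> carrier_mat d d) \<and>
     (\<forall>x\<in>sl n. \<forall>y\<in>sl n. \<forall>a b. sigma (a \<cdot>\<^sub>m x + b \<cdot>\<^sub>m y) = a \<cdot>\<^sub>m sigma x + b \<cdot>\<^sub>m sigma y) \<and>
     (\<forall>x\<in>sl n. \<forall>y\<in>sl n. sigma x * sigma y - sigma y * sigma x = sigma (x * y - y * x)))"

definition lin_subspace :: "nat \<Rightarrow> complex vec set \<Rightarrow> bool" where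
  "lin_subspace d W = (W \<subseteq> carrier_vec d \<and> 0\<^sub>v d \<in> W \<and>
     (\<forall>u\<in>W. \<forall>w\<in>W. u + w \<in> W) \<and> (\<forall>c. \<forall>u\<in>W. c \<cdot>\<^sub>v u \<in> W))"

text \<open>Defining relations of F_{lam1,lam2} on the vector v (the image of the generator 1).\<close>
definition F_rels :: "nat \<Rightarrow> (nat \<Rightarrow> nat) \<Rightarrow> (nat \<Rightarrow> nat) \<Rightarrow> nat \<Rightarrow>
    (complex mat \<Rightarrow> nat \<Rightarrow> complex mat) \<Rightarrow> complex vec \<Rightarrow> bool" where
  "F_rels n lam1 lam2 d rho v =
    (v \<in> carrier_vec d \<and>
     (\<forall>x\<in>npos n. \<forall>k. rho x k *\<^sub>v v = 0\<^sub>v d) \<and>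
     (\<forall>h\<in>cartan n. \<forall>k\<ge>1. rho h k *\<^sub>v v = 0\<^sub>v d) \<and>
     (\<forall>x\<in>nneg n \<inter> sl n. \<forall>k\<ge>2. rho x k *\<^sub>v v = 0\<^sub>v d) \<and>
     (\<forall>h\<in>cartan n. rho h 0 *\<^sub>v v = weight_eval n (\<lambda>i. lam1 i + lam2 i) h \<cdot>\<^sub>v v) \<and>
     (\<forall>i j m. i < j \<and> j < n \<and> of_nat m = weight_eval n (\<lambda>i. lam1 i + lam2 i) (h_root n i j) \<longrightarrow>
        (rho (f_root n i j) 0 ^\<^sub>m (m + 1)) *\<^sub>v v = 0\<^sub>v d) \<and>
     (\<forall>i j m1 m2. i < j \<and> j < n \<and> of_nat m1 = weight_eval n lam1 (h_root n i j)
          \<and> of_nat m2 = weight_eval n lam2 (h_root n i j) \<longrightarrow>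
        (rho (f_root n i j) 1 ^\<^sub>m (min m1 m2 + 1)) *\<^sub>v v = 0\<^sub>v d))"

text \<open>(d, rho, v) is (a matrix realisation of) F_{lam1,lam2}: a finite-dimensional
  current-algebra module generated by v, v satisfies the relations, and it has the
  universal property among finite-dimensional modules with a vector satisfying the
  relations (this characterises F up to isomorphism since F is finite-dimensional).\<close>
definition is_F :: "nat \<Rightarrow> (nat \<Rightarrow> nat) \<Rightarrow> (nat \<Rightarrow> nat) \<Rightarrow> nat \<Rightarrow>
    (complex mat \<Rightarrow> nat \<Rightarrow> complex mat) \<Rightarrow> complex vec \<Rightarrow> bool" where
  "is_F n lam1 lam2 d rho v =
    (current_rep n d rho \<and> F_rels n lam1 lam2 d rho v \<and>
     (\<forall>W. lin_subspace d W \<and> v \<in> W \<and> (\<forall>x\<in>sl n. \<forall>k. \<forall>u\<in>W. rho x k *\<^sub>v u \<in> W)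
          \<longrightarrow> W = carrier_vec d) \<and>
     (\<forall>d' rho' w. current_rep n d' rho' \<and> F_rels n lam1 lam2 d' rho' w \<longrightarrow>
        (\<exists>\<phi>\<in>carrier_mat d' d. (\<forall>x\<in>sl n. \<forall>k. \<phi> * rho x k = rho' x k * \<phi>) \<and> \<phi> *\<^sub>v v = w)))"

definition is_simple_hw :: "nat \<Rightarrow> (nat \<Rightarrow> nat) \<Rightarrow> nat \<Rightarrow> (complex mat \<Rightarrow> complex mat) \<Rightarrow> bool" where
  "is_simple_hw n tau m sigma =
    (sl_rep n m sigma \<and> m > 0 \<and>
     (\<forall>W. lin_subspace m W \<and> (\<forall>x\<in>sl n. \<forall>u\<in>W. sigma x *\<^sub>v u \<in> W)
          \<longrightarrow> W = {0\<^sub>v m} \<or> W = carrier_vec m) \<and>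
     (\<exists>u\<in>carrier_vec m. u \<noteq> 0\<^sub>v m \<and> (\<forall>x\<in>npos n. sigma x *\<^sub>v u = 0\<^sub>v m) \<and>
        (\<forall>h\<in>cartan n. sigma h *\<^sub>v u = weight_eval n tau h \<cdot>\<^sub>v u)))"

definition hom_sl :: "nat \<Rightarrow> nat \<Rightarrow> (complex mat \<Rightarrow> nat \<Rightarrow> complex mat) \<Rightarrow> nat \<Rightarrow>
    (complex mat \<Rightarrow> complex mat) \<Rightarrow> complex mat set" where
  "hom_sl n d rho m sigma = {\<phi> \<in> carrier_mat m d. \<forall>x\<in>sl n. \<phi> * rho x 0 = sigma x * \<phi>}"

definition mat_lincomb :: "nat \<Rightarrow> nat \<Rightarrow> complex list \<Rightarrow> complex mat list \<Rightarrow> complex mat" where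
  "mat_lincomb r c cs B = foldr (\<lambda>(a, b) acc. a \<cdot>\<^sub>m b + acc) (zip cs B) (0\<^sub>m r c)"

definition mat_dim :: "nat \<Rightarrow> nat \<Rightarrow> complex mat set \<Rightarrow> nat" where
  "mat_dim r c S = (LEAST k. \<exists>B. length B = k \<and> set B \<subseteq> S \<and>
      (\<forall>s\<in>S. \<exists>cs. length cs = length B \<and> s = mat_lincomb r c cs B))"

end

theory Submission
  imports Defs "Jordan_Normal_Form.Char_Poly"
begin


lemma Emat_carrier[simp]: "Emat n i j \<in> carrier_mat n n"
  by (simp add: Emat_def)

lemma Emat_index[simp]: "a < n \<Longrightarrow> b < n \<Longrightarrow> Emat n i j $$ (a,b) = (if a = i \<and> b = j then 1 else 0)"
  by (simp add: Emat_def)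

lemma Emat_dims[simp]: "dim_row (Emat n i j) = n" "dim_col (Emat n i j) = n"
  by (simp_all add: Emat_def)

lemma mtrace_comm:
  assumes "x \<in> carrier_mat n n" "y \<in> carrier_mat n n"
  shows "mtrace (x * y - y * x) = 0"
proof -
  have "mtrace (x*y) = (\<Sum>i<n. \<Sum>k<n. x $$ (i,k) * y $$ (k,i))"
    using assms by (simp add: mtrace_def scalar_prod_def lessThan_atLeast0)
  also have "\<dots> = (\<Sum>k<n. \<Sum>i<n. y $$ (k,i) * x $$ (i,k))"
    by (subst sum.swap) (simp add: mult.commute)
  also have "\<dots> = mtrace (y*x)"
    using assms by (simp add: mtrace_def scalar_prod_def lessThan_atLeast0)
  finally have "mtrace (x*y) = mtrace (y*x)" .
  moreover have "mtrace (x*y - y*x) = mtrace (x*y) - mtrace (y*x)"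
    using assms by (simp add: mtrace_def sum_subtractf)
  ultimately show ?thesis by simp
qed

lemma comm_sl: "x \<in> sl n \<Longrightarrow> y \<in> sl n \<Longrightarrow> x * y - y * x \<in> sl n"
  unfolding sl_def using mtrace_comm by auto

lemma Emat_sl: "i \<noteq> j \<Longrightarrow> Emat n i j \<in> sl n"
  unfolding sl_def mtrace_def by (auto simp: Emat_def intro!: sum.neutral)

lemma cartan_sl: "h \<in> cartan n \<Longrightarrow> h \<in> sl n"
  unfolding cartan_def by auto

lemma npos_sl: "x \<in> npos n \<Longrightarrow> x \<in> sl n"
  unfolding npos_def sl_def mtrace_def by auto

lemma Emat_npos: "i < j \<Longrightarrow> Emat n i j \<in> npos n"
  unfolding npos_def by auto

lemma Emat_nneg: "j < i \<Longrightarrow> Emat n i j \<in> nneg n"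
  unfolding nneg_def by auto

lemma mult_Emat_index:
  assumes A: "A \<in> carrier_mat n n" and ab: "a < n" "b < n" and ij: "i < n" "j < n"
  shows "(A * Emat n i j) $$ (a,b) = (if b = j then A $$ (a,i) else 0)"
proof -
  have "(A * Emat n i j) $$ (a,b) = (\<Sum>k\<in>{0..<n}. A $$ (a,k) * (if k = i \<and> b = j then 1 else 0))"
    using A ab by (simp add: scalar_prod_def)
  also have "\<dots> = (\<Sum>k\<in>{0..<n}. if k = i then (if b = j then A $$ (a,i) else 0) else 0)"
    by (rule sum.cong) auto
  finally show ?thesis using ij by simp
qed

lemma Emat_mult_index:
  assumes A: "A \<in> carrier_mat n n" and ab: "a < n" "b < n" and ij: "i < n" "j < n"
  shows "(Emat n i j * A) $$ (a,b) = (if a = i then A $$ (j,b) else 0)"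
proof -
  have "(Emat n i j * A) $$ (a,b) = (\<Sum>k\<in>{0..<n}. (if a = i \<and> k = j then 1 else 0) * A $$ (k,b))"
    using A ab by (simp add: scalar_prod_def)
  also have "\<dots> = (\<Sum>k\<in>{0..<n}. if k = j then (if a = i then A $$ (j,b) else 0) else 0)"
    by (rule sum.cong) auto
  finally show ?thesis using ij by simp
qed

lemma cartan_Emat:
  assumes h: "h \<in> cartan n" and ij: "i < n" "j < n"
  shows "h * Emat n i j - Emat n i j * h = (h $$ (i,i) - h $$ (j,j)) \<cdot>\<^sub>m Emat n i j"
proof -
  have hc: "h \<in> carrier_mat n n" and hd: "\<And>a b. a < n \<Longrightarrow> b < n \<Longrightarrow> a \<noteq> b \<Longrightarrow> h $$ (a,b) = 0"
    using h unfolding cartan_def sl_def by auto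
  show ?thesis
  proof (rule eq_matI)
    fix a b assume a: "a < dim_row ((h $$ (i,i) - h $$ (j,j)) \<cdot>\<^sub>m Emat n i j)" and b: "b < dim_col ((h $$ (i,i) - h $$ (j,j)) \<cdot>\<^sub>m Emat n i j)"
    hence a: "a < n" and b: "b < n" by auto
    have 1: "(h * Emat n i j) $$ (a,b) = (if b = j then h $$ (a,i) else 0)"
      by (rule mult_Emat_index[OF hc a b ij])
    have 2: "(Emat n i j * h) $$ (a,b) = (if a = i then h $$ (j,b) else 0)"
      by (rule Emat_mult_index[OF hc a b ij])
    show "(h * Emat n i j - Emat n i j * h) $$ (a, b) = ((h $$ (i,i) - h $$ (j,j)) \<cdot>\<^sub>m Emat n i j) $$ (a, b)"
      using hc a b 1 2 hd[of a i] hd[of j b] ij by auto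
  qed (use hc in auto)
qed

lemma Emat_comm:
  assumes "i < n" "j < n" "i \<noteq> j"
  shows "Emat n i j * Emat n j i - Emat n j i * Emat n i j = h_root n i j"
proof (rule eq_matI)
  fix a b assume "a < dim_row (h_root n i j)" "b < dim_col (h_root n i j)"
  hence a: "a < n" and b: "b < n" by (auto simp: h_root_def)
  show "(Emat n i j * Emat n j i - Emat n j i * Emat n i j) $$ (a, b) = h_root n i j $$ (a, b)"
  proof -
    have "(Emat n i j * Emat n j i - Emat n j i * Emat n i j) $$ (a, b) = (Emat n i j * Emat n j i) $$ (a, b) - (Emat n j i * Emat n i j) $$ (a, b)"
      using a b by simp
    also have "\<dots> = (if a = i then Emat n j i $$ (j, b) else 0) - (if a = j then Emat n i j $$ (i, b) else 0)"
      using Emat_mult_index[OF Emat_carrier a b, of i j j i] Emat_mult_index[OF Emat_carrier a b, of j i i j] assms by simp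
    finally show ?thesis using a b assms by (simp add: h_root_def)
  qed
qed (auto simp: h_root_def)


lemma smult_mat_mult_vec: "A \<in> carrier_mat nr nc \<Longrightarrow> w \<in> carrier_vec nc \<Longrightarrow> (a \<cdot>\<^sub>m A) *\<^sub>v w = a \<cdot>\<^sub>v (A *\<^sub>v w)"
  by (intro eq_vecI) (auto simp: scalar_prod_def sum_distrib_left mult.assoc)

lemma rep_carrier: "current_rep n d rho \<Longrightarrow> x \<in> sl n \<Longrightarrow> rho x k \<in> carrier_mat d d"
  unfolding current_rep_def by auto

lemma rep_smult:
  assumes r: "current_rep n d rho" and x: "x \<in> sl n"
  shows "rho (a \<cdot>\<^sub>m x) k = a \<cdot>\<^sub>m rho x k"
proof -
  have xc: "x \<in> carrier_mat n n" using x unfolding sl_def by auto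
  have "a \<cdot>\<^sub>m x + 0 \<cdot>\<^sub>m x = a \<cdot>\<^sub>m x" using xc by (intro eq_matI) auto
  moreover have "rho (a \<cdot>\<^sub>m x + 0 \<cdot>\<^sub>m x) k = a \<cdot>\<^sub>m rho x k + 0 \<cdot>\<^sub>m rho x k"
    using r x unfolding current_rep_def by blast
  moreover have "a \<cdot>\<^sub>m rho x k + 0 \<cdot>\<^sub>m rho x k = a \<cdot>\<^sub>m rho x k"
    using rep_carrier[OF r x, of k] by (intro eq_matI) auto
  ultimately show ?thesis by simp
qed

lemma rep_comm:
  assumes r: "current_rep n d rho" and x: "x \<in> sl n" and y: "y \<in> sl n"
  shows "rho x k * rho y l - rho y l * rho x k = rho (x * y - y * x) (k + l)"
  using r x y unfolding current_rep_def by blast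

definition alpha_sum :: "nat \<Rightarrow> (nat \<Rightarrow> nat) \<Rightarrow> complex mat \<Rightarrow> complex" where
  "alpha_sum n c h = (\<Sum>l<n-1. of_nat (c l) * (h $$ (l,l) - h $$ (l+1,l+1)))"

definition incr :: "nat \<Rightarrow> nat \<Rightarrow> (nat \<Rightarrow> nat) \<Rightarrow> nat \<Rightarrow> nat" where
  "incr i j c = (\<lambda>l. c l + (if i \<le> l \<and> l < j then 1 else 0))"

inductive_set Mon :: "nat \<Rightarrow> (complex mat \<Rightarrow> nat \<Rightarrow> complex mat) \<Rightarrow> complex vec \<Rightarrow> (complex vec \<times> (nat \<Rightarrow> nat)) set"
  for n rho v where
  base: "(v, \<lambda>_. 0) \<in> Mon n rho v"
| step: "(w, c) \<in> Mon n rho v \<Longrightarrow> i < j \<Longrightarrow> j < n \<Longrightarrow> (rho (Emat n j i) k *\<^sub>v w, incr i j c) \<in> Mon n rho v"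

lemma Mon_carrier:
  assumes r: "current_rep n d rho" and v: "v \<in> carrier_vec d" and m: "(w, c) \<in> Mon n rho v"
  shows "w \<in> carrier_vec d"
  using m
proof (induction rule: Mon.induct)
  case base then show ?case using v by simp
next
  case (step w c i j k)
  then show ?case using rep_carrier[OF r Emat_sl[of j i n], of k] by auto
qed

lemma telescope:
  fixes h :: "complex mat"
  assumes "i < j" "j < n"
  shows "(\<Sum>l<n-1. of_nat (if i \<le> l \<and> l < j then 1 else 0) * (h $$ (l,l) - h $$ (l+1,l+1))) = h $$ (i,i) - h $$ (j,j)"
proof -
  have "(\<Sum>l<n-1. of_nat (if i \<le> l \<and> l < j then 1 else 0) * (h $$ (l,l) - h $$ (l+1,l+1)))
      = (\<Sum>l\<in>{i..<j}. (h $$ (l,l) - h $$ (Suc l, Suc l)))"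
    using assms by (intro sum.mono_neutral_cong_right) auto
  also have "\<dots> = - (\<Sum>l\<in>{i..<j}. (h $$ (Suc l, Suc l) - h $$ (l,l)))"
    by (simp add: sum_negf[symmetric])
  also have "\<dots> = h $$ (i,i) - h $$ (j,j)"
    using assms by (subst sum_Suc_diff') auto
  finally show ?thesis .
qed

lemma alpha_sum_incr:
  assumes "i < j" "j < n"
  shows "alpha_sum n (incr i j c) h = alpha_sum n c h + (h $$ (i,i) - h $$ (j,j))"
  using telescope[OF assms, of h]
  by (simp add: alpha_sum_def incr_def distrib_right sum.distrib)


definition hwv :: "nat \<Rightarrow> nat \<Rightarrow> (complex mat \<Rightarrow> nat \<Rightarrow> complex mat) \<Rightarrow> complex vec \<Rightarrow> (nat \<Rightarrow> nat) \<Rightarrow> bool" where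
  "hwv n d rho v lam = (v \<in> carrier_vec d \<and> (\<forall>x\<in>npos n. \<forall>k. rho x k *\<^sub>v v = 0\<^sub>v d) \<and>
     (\<forall>h\<in>cartan n. \<forall>k\<ge>1. rho h k *\<^sub>v v = 0\<^sub>v d) \<and>
     (\<forall>h\<in>cartan n. rho h 0 *\<^sub>v v = weight_eval n lam h \<cdot>\<^sub>v v))"

lemma Mon_weight:
  assumes r: "current_rep n d rho" and hw: "hwv n d rho v lam" and m: "(w, c) \<in> Mon n rho v"
    and h: "h \<in> cartan n"
  shows "rho h 0 *\<^sub>v w = (weight_eval n lam h - alpha_sum n c h) \<cdot>\<^sub>v w"
  using m
proof (induction rule: Mon.induct)
  case base
  then show ?case using hw h by (simp add: hwv_def alpha_sum_def)
next
  case (step w c i j k)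
  have v: "v \<in> carrier_vec d" using hw by (simp add: hwv_def)
  have wc: "w \<in> carrier_vec d" using Mon_carrier[OF r v step(1)] .
  have hs: "h \<in> sl n" using h by (rule cartan_sl)
  have Es: "Emat n j i \<in> sl n" using step by (intro Emat_sl) auto
  define E where "E = Emat n j i"
  define R where "R = rho E k"
  define H where "H = rho h 0"
  define \<mu> where "\<mu> = weight_eval n lam h - alpha_sum n c h"
  have Rc: "R \<in> carrier_mat d d" unfolding R_def E_def using rep_carrier[OF r Es] .
  have Hc: "H \<in> carrier_mat d d" unfolding H_def using rep_carrier[OF r hs] .
  have "H * R - R * H = rho (h * E - E * h) k"
    unfolding H_def R_def using rep_comm[OF r hs Es[folded E_def], of 0 k] by simp
  also have "h * E - E * h = (h $$ (j,j) - h $$ (i,i)) \<cdot>\<^sub>m E"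
    unfolding E_def using cartan_Emat[OF h, of j i] step by auto
  also have "rho \<dots> k = (h $$ (j,j) - h $$ (i,i)) \<cdot>\<^sub>m R"
    unfolding R_def using rep_smult[OF r Es[folded E_def]] by simp
  finally have eq1: "H * R - R * H = (h $$ (j,j) - h $$ (i,i)) \<cdot>\<^sub>m R" .
  have eq2: "(H * R - R * H) *\<^sub>v w = H *\<^sub>v (R *\<^sub>v w) - R *\<^sub>v (H *\<^sub>v w)"
    using Hc Rc wc by (simp add: minus_mult_distrib_mat_vec[of _ d d])
  have eq3: "R *\<^sub>v (H *\<^sub>v w) = \<mu> \<cdot>\<^sub>v (R *\<^sub>v w)"
    using step(4) Rc wc unfolding H_def \<mu>_def by (simp add: mult_mat_vec[OF Rc wc])
  have eq4: "(H * R - R * H) *\<^sub>v w = (h $$ (j,j) - h $$ (i,i)) \<cdot>\<^sub>v (R *\<^sub>v w)"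
    unfolding eq1 using smult_mat_mult_vec[OF Rc wc] .
  have as: "alpha_sum n (incr i j c) h = alpha_sum n c h + (h $$ (i,i) - h $$ (j,j))"
    using alpha_sum_incr step by auto
  show ?case
    unfolding R_def[symmetric, unfolded E_def] H_def[symmetric] as
  proof (rule eq_vecI)
    fix a assume a: "a < dim_vec ((weight_eval n lam h - (alpha_sum n c h + (h $$ (i, i) - h $$ (j, j)))) \<cdot>\<^sub>v (R *\<^sub>v w))"
    hence a: "a < d" using Rc by simp
    have "(H *\<^sub>v (R *\<^sub>v w)) $ a = ((H * R - R * H) *\<^sub>v w) $ a + (R *\<^sub>v (H *\<^sub>v w)) $ a"
      using eq2 a Hc Rc wc by simp
    also have "\<dots> = (h $$ (j,j) - h $$ (i,i)) * (R *\<^sub>v w) $ a + \<mu> * (R *\<^sub>v w) $ a"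
      unfolding eq4 eq3 using a Rc by simp
    finally show "(H *\<^sub>v (R *\<^sub>v w)) $ a = ((weight_eval n lam h - (alpha_sum n c h + (h $$ (i, i) - h $$ (j, j)))) \<cdot>\<^sub>v (R *\<^sub>v w)) $ a"
      using a Rc unfolding \<mu>_def by (simp add: algebra_simps)
  qed (use Hc Rc in simp)
qed


lemma sl_induct:
  assumes x: "x \<in> sl n"
    and cart: "\<And>h. h \<in> cartan n \<Longrightarrow> P h"
    and E: "\<And>a b. a < n \<Longrightarrow> b < n \<Longrightarrow> a \<noteq> b \<Longrightarrow> P (Emat n a b)"
    and lin: "\<And>x y a b. x \<in> sl n \<Longrightarrow> y \<in> sl n \<Longrightarrow> P x \<Longrightarrow> P y \<Longrightarrow> P (a \<cdot>\<^sub>m x + b \<cdot>\<^sub>m y)"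
  shows "P x"
proof -
  define N where "N = (\<lambda>x :: complex mat. card {(a,b). a < n \<and> b < n \<and> a \<noteq> b \<and> x $$ (a,b) \<noteq> 0})"
  have fin: "finite {(a,b). a < n \<and> b < n \<and> a \<noteq> b \<and> y $$ (a,b) \<noteq> 0}" for y :: "complex mat"
    by (rule finite_subset[of _ "{..<n} \<times> {..<n}"]) auto
  show ?thesis using x
  proof (induction "N x" arbitrary: x rule: less_induct)
    case less
    have xc: "x \<in> carrier_mat n n" and tr: "mtrace x = 0" using less.prems unfolding sl_def by auto
    show ?case
    proof (cases "\<exists>a b. a < n \<and> b < n \<and> a \<noteq> b \<and> x $$ (a,b) \<noteq> 0")
      case False
      hence "x \<in> cartan n" using less.prems unfolding cartan_def by auto
      then show ?thesis by (rule cart)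
    next
      case True
      then obtain a b where ab: "a < n" "b < n" "a \<noteq> b" "x $$ (a,b) \<noteq> 0" by auto
      define x' where "x' = x + (- x $$ (a,b)) \<cdot>\<^sub>m Emat n a b"
      have x'c: "x' \<in> carrier_mat n n" unfolding x'_def using xc by auto
      have x'idx: "i < n \<Longrightarrow> j < n \<Longrightarrow> x' $$ (i,j) = (if i = a \<and> j = b then 0 else x $$ (i,j))" for i j
        unfolding x'_def using xc by auto
      have "mtrace x' = mtrace x"
        unfolding mtrace_def using x'c xc x'idx ab by (auto intro!: sum.cong)
      hence x's: "x' \<in> sl n" using x'c tr unfolding sl_def by auto
      have eq: "x = x $$ (a,b) \<cdot>\<^sub>m Emat n a b + 1 \<cdot>\<^sub>m x'"
        by (rule eq_matI) (use xc x'c x'idx in auto)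
      have sub: "{(i,j). i < n \<and> j < n \<and> i \<noteq> j \<and> x' $$ (i,j) \<noteq> 0} \<subset> {(i,j). i < n \<and> j < n \<and> i \<noteq> j \<and> x $$ (i,j) \<noteq> 0}"
      proof -
        have "{(i,j). i < n \<and> j < n \<and> i \<noteq> j \<and> x' $$ (i,j) \<noteq> 0} \<subseteq> {(i,j). i < n \<and> j < n \<and> i \<noteq> j \<and> x $$ (i,j) \<noteq> 0}"
          using x'idx by (auto split: if_splits)
        moreover have "(a,b) \<notin> {(i,j). i < n \<and> j < n \<and> i \<noteq> j \<and> x' $$ (i,j) \<noteq> 0}" using x'idx ab by auto
        moreover have "(a,b) \<in> {(i,j). i < n \<and> j < n \<and> i \<noteq> j \<and> x $$ (i,j) \<noteq> 0}" using ab by auto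
        ultimately show ?thesis by blast
      qed
      have "N x' < N x" unfolding N_def by (rule psubset_card_mono[OF fin sub])
      hence Px': "P x'" using less.hyps x's by blast
      have "P (x $$ (a,b) \<cdot>\<^sub>m Emat n a b + 1 \<cdot>\<^sub>m x')"
        by (rule lin[OF Emat_sl[OF ab(3)] x's E[OF ab(1-3)] Px'])
      then show ?thesis using eq by simp
    qed
  qed
qed

inductive_set vspan :: "nat \<Rightarrow> complex vec set \<Rightarrow> complex vec set" for d S where
  zero: "0\<^sub>v d \<in> vspan d S"
| gen: "s \<in> S \<Longrightarrow> s \<in> vspan d S"
| lin: "u \<in> vspan d S \<Longrightarrow> w \<in> vspan d S \<Longrightarrow> a \<cdot>\<^sub>v u + b \<cdot>\<^sub>v w \<in> vspan d S"

lemma vspan_carrier: assumes "S \<subseteq> carrier_vec d" "u \<in> vspan d S" shows "u \<in> carrier_vec d"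
  using assms(2) by (induction rule: vspan.induct) (use assms(1) in auto)

lemma vspan_add: assumes "S \<subseteq> carrier_vec d" "u \<in> vspan d S" "w \<in> vspan d S"
  shows "u + w \<in> vspan d S"
proof -
  have "1 \<cdot>\<^sub>v u + 1 \<cdot>\<^sub>v w \<in> vspan d S" using assms by (intro vspan.lin)
  moreover have "1 \<cdot>\<^sub>v u + 1 \<cdot>\<^sub>v w = u + w" using vspan_carrier[OF assms(1)] assms by auto
  ultimately show ?thesis by simp
qed

lemma vspan_smult: assumes "S \<subseteq> carrier_vec d" "u \<in> vspan d S"
  shows "a \<cdot>\<^sub>v u \<in> vspan d S"
proof -
  have "a \<cdot>\<^sub>v u + 0 \<cdot>\<^sub>v u \<in> vspan d S" using assms by (intro vspan.lin)
  moreover have "a \<cdot>\<^sub>v u + 0 \<cdot>\<^sub>v u = a \<cdot>\<^sub>v u" using vspan_carrier[OF assms(1)] assms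
    by (intro eq_vecI) auto
  ultimately show ?thesis by simp
qed

lemma vspan_mat:
  assumes A: "A \<in> carrier_mat d d" and S: "S \<subseteq> carrier_vec d" and S': "S' \<subseteq> carrier_vec d"
    and gen: "\<And>s. s \<in> S \<Longrightarrow> A *\<^sub>v s \<in> vspan d S'"
    and u: "u \<in> vspan d S"
  shows "A *\<^sub>v u \<in> vspan d S'"
  using u
proof (induction rule: vspan.induct)
  case zero
  have "A *\<^sub>v 0\<^sub>v d = 0\<^sub>v d" using A by auto
  then show ?case using vspan.zero by metis
next
  case (gen s) then show ?case by (rule assms(4))
next
  case (lin u w a b)
  have uc: "u \<in> carrier_vec d" and wc: "w \<in> carrier_vec d" using vspan_carrier[OF S] lin by auto
  have "A *\<^sub>v (a \<cdot>\<^sub>v u + b \<cdot>\<^sub>v w) = a \<cdot>\<^sub>v (A *\<^sub>v u) + b \<cdot>\<^sub>v (A *\<^sub>v w)"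
    using A uc wc by (simp add: mult_add_distrib_mat_vec[of _ d d] mult_mat_vec)
  then show ?case using lin vspan.lin by metis
qed


lemma lin_mat_vec:
  assumes "X \<in> carrier_mat d d" "Y \<in> carrier_mat d d" "v \<in> carrier_vec d"
  shows "(a \<cdot>\<^sub>m X + b \<cdot>\<^sub>m Y) *\<^sub>v v = a \<cdot>\<^sub>v (X *\<^sub>v v) + b \<cdot>\<^sub>v (Y *\<^sub>v v)"
  using assms by (subst add_mult_distrib_mat_vec[of _ d d]) (auto simp: smult_mat_mult_vec)

lemma Mon_invariant:
  assumes r: "current_rep n d rho" and hw: "hwv n d rho v lam" and m: "(w, c) \<in> Mon n rho v"
  shows "x \<in> sl n \<Longrightarrow> rho x k *\<^sub>v w \<in> vspan d (fst ` Mon n rho v)"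
  using m
proof (induction arbitrary: x k rule: Mon.induct)
  have v: "v \<in> carrier_vec d" using hw by (simp add: hwv_def)
  have MSc: "fst ` Mon n rho v \<subseteq> carrier_vec d" using Mon_carrier[OF r v] by auto
  case base
  show ?case
  proof (rule sl_induct[OF base, where P="\<lambda>x. rho x k *\<^sub>v v \<in> vspan d (fst ` Mon n rho v)"])
    fix h assume h1: "h \<in> cartan n"
    show "rho h k *\<^sub>v v \<in> vspan d (fst ` Mon n rho v)"
    proof (cases "k = 0")
      case True
      have "rho h k *\<^sub>v v = weight_eval n (lam) h \<cdot>\<^sub>v v" using hw h1 True by (simp add: hwv_def)
      moreover have "v \<in> vspan d (fst ` Mon n rho v)" by (rule vspan.gen) (use Mon.base in force)
      ultimately show ?thesis using vspan_smult[OF MSc] by metis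
    next
      case False
      then have "rho h k *\<^sub>v v = 0\<^sub>v d" using hw h1 by (simp add: hwv_def)
      then show ?thesis using vspan.zero by metis
    qed
  next
    fix a b assume 2: "a < n" "b < n" "a \<noteq> b"
    show "rho (Emat n a b) k *\<^sub>v v \<in> vspan d (fst ` Mon n rho v)"
    proof (cases "a < b")
      case True
      then have "rho (Emat n a b) k *\<^sub>v v = 0\<^sub>v d" using hw Emat_npos[OF True, of n] by (simp add: hwv_def)
      then show ?thesis using vspan.zero by metis
    next
      case False
      then have "b < a" using 2 by auto
      then have "(rho (Emat n a b) k *\<^sub>v v, incr b a (\<lambda>_. 0)) \<in> Mon n rho v"
        using Mon.step[OF Mon.base, of b a n rho k] 2 by auto
      then show ?thesis by (intro vspan.gen) force
    qed
  next
    fix x y a b assume 3: "x \<in> sl n" "y \<in> sl n" "rho x k *\<^sub>v v \<in> vspan d (fst ` Mon n rho v)" "rho y k *\<^sub>v v \<in> vspan d (fst ` Mon n rho v)"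
    have "rho (a \<cdot>\<^sub>m x + b \<cdot>\<^sub>m y) k = a \<cdot>\<^sub>m rho x k + b \<cdot>\<^sub>m rho y k"
      using r 3 unfolding current_rep_def by blast
    then have "rho (a \<cdot>\<^sub>m x + b \<cdot>\<^sub>m y) k *\<^sub>v v = a \<cdot>\<^sub>v (rho x k *\<^sub>v v) + b \<cdot>\<^sub>v (rho y k *\<^sub>v v)"
      using lin_mat_vec[OF rep_carrier[OF r 3(1)] rep_carrier[OF r 3(2)] v] by simp
    then show "rho (a \<cdot>\<^sub>m x + b \<cdot>\<^sub>m y) k *\<^sub>v v \<in> vspan d (fst ` Mon n rho v)" using 3 vspan.lin by metis
  qed
next
  case (step w c i j l)
  have v: "v \<in> carrier_vec d" using hw by (simp add: hwv_def)
  have MSc: "fst ` Mon n rho v \<subseteq> carrier_vec d" using Mon_carrier[OF r v] by auto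
  have wc: "w \<in> carrier_vec d" using Mon_carrier[OF r v step(1)] .
  have Es: "Emat n j i \<in> sl n" using step by (intro Emat_sl) auto
  define R where "R = rho (Emat n j i) l"
  define X where "X = rho x k"
  define C where "C = rho (x * Emat n j i - Emat n j i * x) (k + l)"
  have Rc: "R \<in> carrier_mat d d" unfolding R_def using rep_carrier[OF r Es] .
  have Xc: "X \<in> carrier_mat d d" unfolding X_def using rep_carrier[OF r step(5)] .
  have Cs: "x * Emat n j i - Emat n j i * x \<in> sl n" using comm_sl[OF step(5) Es] .
  have eq1: "X * R - R * X = C" unfolding X_def R_def C_def using rep_comm[OF r step(5) Es] .
  have eq2: "(X * R - R * X) *\<^sub>v w = X *\<^sub>v (R *\<^sub>v w) - R *\<^sub>v (X *\<^sub>v w)"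
    using Xc Rc wc by (simp add: minus_mult_distrib_mat_vec[of _ d d])
  have e: "C *\<^sub>v w = X *\<^sub>v (R *\<^sub>v w) - R *\<^sub>v (X *\<^sub>v w)" using eq1 eq2 by simp
  have Cc: "C \<in> carrier_mat d d" using rep_carrier[OF r Cs, of "k+l"] unfolding C_def .
  have eq3: "X *\<^sub>v (R *\<^sub>v w) = R *\<^sub>v (X *\<^sub>v w) + C *\<^sub>v w"
  proof (rule eq_vecI)
    fix a assume "a < dim_vec (R *\<^sub>v (X *\<^sub>v w) + C *\<^sub>v w)"
    hence a: "a < d" using Cc by simp
    have "(C *\<^sub>v w) $ a = (X *\<^sub>v (R *\<^sub>v w)) $ a - (R *\<^sub>v (X *\<^sub>v w)) $ a"
      unfolding e using a Rc Xc by (intro index_minus_vec) auto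
    then show "(X *\<^sub>v (R *\<^sub>v w)) $ a = (R *\<^sub>v (X *\<^sub>v w) + C *\<^sub>v w) $ a"
      using a Rc Cc by (subst index_add_vec) auto
  qed (use Rc Xc Cc in simp)
  have t1: "R *\<^sub>v (X *\<^sub>v w) \<in> vspan d (fst ` Mon n rho v)"
  proof (rule vspan_mat[OF Rc MSc MSc])
    fix s assume "s \<in> fst ` Mon n rho v"
    then obtain c' where "(s, c') \<in> Mon n rho v" by auto
    then have "(R *\<^sub>v s, incr i j c') \<in> Mon n rho v" unfolding R_def using Mon.step step(2,3) by blast
    then show "R *\<^sub>v s \<in> vspan d (fst ` Mon n rho v)" by (intro vspan.gen) force
  next
    show "X *\<^sub>v w \<in> vspan d (fst ` Mon n rho v)" unfolding X_def by (rule step.IH[OF step(5)])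
  qed
  have t2: "C *\<^sub>v w \<in> vspan d (fst ` Mon n rho v)" unfolding C_def by (rule step.IH[OF Cs])
  show ?case
    unfolding X_def[symmetric] R_def[symmetric] eq3 by (rule vspan_add[OF MSc t1 t2])
qed


definition vsum :: "nat \<Rightarrow> complex vec list \<Rightarrow> complex vec" where
  "vsum D xs = foldr (+) xs (0\<^sub>v D)"

lemma vsum_simps[simp]: "vsum D [] = 0\<^sub>v D" "vsum D (x # xs) = x + vsum D xs"
  by (simp_all add: vsum_def)

lemma vsum_carrier: "set xs \<subseteq> carrier_vec D \<Longrightarrow> vsum D xs \<in> carrier_vec D"
  by (induction xs) auto

lemma vsum_index: "set xs \<subseteq> carrier_vec D \<Longrightarrow> a < D \<Longrightarrow> vsum D xs $ a = sum_list (map (\<lambda>x. x $ a) xs)"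
proof (induction xs)
  case Nil then show ?case by simp
next
  case (Cons x xs)
  then have "vsum D xs \<in> carrier_vec D" using vsum_carrier by auto
  then show ?case using Cons by simp
qed

lemma mat_vsum: "A \<in> carrier_mat D' D \<Longrightarrow> set xs \<subseteq> carrier_vec D \<Longrightarrow> A *\<^sub>v vsum D xs = vsum D' (map (\<lambda>x. A *\<^sub>v x) xs)"
proof (induction xs)
  case Nil then show ?case by auto
next
  case (Cons x xs)
  then have "vsum D xs \<in> carrier_vec D" using vsum_carrier by auto
  then show ?case using Cons by (simp add: mult_add_distrib_mat_vec[of _ D' D])
qed

lemma sum_list_fst_cong: "(\<And>p. p \<in> set ps \<Longrightarrow> f (fst p) = g p) \<Longrightarrow> sum_list (map f (map fst ps)) = sum_list (map g ps)"
  by (induction ps) auto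

lemma set_map_mult_carrier: "dim_row A = D \<Longrightarrow> set (map (\<lambda>x. A *\<^sub>v x) xs) \<subseteq> carrier_vec D"
  by (induction xs) (auto intro!: carrier_vecI)

definition eigv :: "nat \<Rightarrow> (complex mat \<Rightarrow> complex mat) \<Rightarrow> complex vec \<Rightarrow> (complex mat \<Rightarrow> complex) \<Rightarrow> bool" where
  "eigv n H z \<mu> = (\<forall>h\<in>cartan n. H h *\<^sub>v z = \<mu> h \<cdot>\<^sub>v z)"

lemma eigv_smult:
  assumes Hc: "\<And>h. h \<in> cartan n \<Longrightarrow> H h \<in> carrier_mat D D" and y: "y \<in> carrier_vec D" and e: "eigv n H y \<nu>"
  shows "eigv n H (c \<cdot>\<^sub>v y) \<nu>"
  unfolding eigv_def
proof
  fix h assume h: "h \<in> cartan n"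
  have "H h *\<^sub>v (c \<cdot>\<^sub>v y) = c \<cdot>\<^sub>v (H h *\<^sub>v y)" by (rule mult_mat_vec[OF Hc[OF h] y])
  also have "\<dots> = c \<cdot>\<^sub>v (\<nu> h \<cdot>\<^sub>v y)" using e h unfolding eigv_def by auto
  also have "\<dots> = \<nu> h \<cdot>\<^sub>v (c \<cdot>\<^sub>v y)" by (simp add: smult_smult_assoc mult.commute)
  finally show "H h *\<^sub>v (c \<cdot>\<^sub>v y) = \<nu> h \<cdot>\<^sub>v (c \<cdot>\<^sub>v y)" .
qed

definition okitem :: "nat \<Rightarrow> nat \<Rightarrow> (complex mat \<Rightarrow> complex mat) \<Rightarrow> (complex mat \<Rightarrow> complex) \<Rightarrow> complex vec
   \<Rightarrow> complex vec \<times> (complex mat \<Rightarrow> complex) \<Rightarrow> bool" where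
  "okitem n D H \<mu> g p = (fst p \<in> carrier_vec D \<and> eigv n H (fst p) (snd p) \<and>
     ((\<exists>h\<in>cartan n. snd p h \<noteq> \<mu> h) \<or> (\<exists>a. fst p = a \<cdot>\<^sub>v g \<and> (\<forall>h\<in>cartan n. snd p h = \<mu> h))))"

lemma eig_sum:
  assumes Hc: "\<And>h. h \<in> cartan n \<Longrightarrow> H h \<in> carrier_mat D D"
    and g: "g \<in> carrier_vec D" "eigv n H g \<mu>"
  shows "\<forall>p\<in>set ys. okitem n D H \<mu> g p \<Longrightarrow> z = vsum D (map fst ys) \<Longrightarrow> eigv n H z \<mu> \<Longrightarrow> \<exists>a. z = a \<cdot>\<^sub>v g"
proof (induction "length ys" arbitrary: ys z rule: less_induct)
  case less
  show ?case
  proof (cases ys)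
    case Nil
    then have "z = 0 \<cdot>\<^sub>v g" using g less.prems by auto
    then show ?thesis by blast
  next
  case (Cons p ys0)
  have prems: "\<forall>p\<in>set (p # ys0). okitem n D H \<mu> g p" "z = vsum D (map fst (p # ys0))" "eigv n H z \<mu>"
    using less.prems Cons by auto
  have lenlt: "length ys0 < length (p # ys0)" by simp
  obtain y1 \<nu>1 where p: "p = (y1, \<nu>1)" by (cases p)
  have ok1: "okitem n D H \<mu> g (y1, \<nu>1)" using prems p by auto
  have okr: "\<forall>p\<in>set ys0. okitem n D H \<mu> g p" using prems by auto
  have ysc: "set (map fst ys0) \<subseteq> carrier_vec D" using okr unfolding okitem_def by auto
  have y1c: "y1 \<in> carrier_vec D" using ok1 unfolding okitem_def by auto
  have zc: "z \<in> carrier_vec D" using prems(2) vsum_carrier[OF ysc] y1c p by auto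
  have zeq: "z = y1 + vsum D (map fst ys0)" using prems(2) p by simp
  show ?thesis
  proof (cases "\<exists>h\<in>cartan n. \<nu>1 h \<noteq> \<mu> h")
    case False
    then obtain a1 where a1: "y1 = a1 \<cdot>\<^sub>v g" using ok1 unfolding okitem_def by auto
    define z' where "z' = vsum D (map fst ys0)"
    have z'c: "z' \<in> carrier_vec D" unfolding z'_def using vsum_carrier[OF ysc] .
    have z'eq: "z' = z - a1 \<cdot>\<^sub>v g" unfolding zeq a1 z'_def[symmetric]
      by (rule eq_vecI) (use z'c g in auto)
    have "eigv n H z' \<mu>"
      unfolding eigv_def
    proof
      fix h assume h: "h \<in> cartan n"
      have "H h *\<^sub>v z' = H h *\<^sub>v z - a1 \<cdot>\<^sub>v (H h *\<^sub>v g)"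
        unfolding z'eq using Hc[OF h] zc g by (simp add: mult_minus_distrib_mat_vec[of _ D D] mult_mat_vec)
      also have "\<dots> = \<mu> h \<cdot>\<^sub>v z - a1 \<cdot>\<^sub>v (\<mu> h \<cdot>\<^sub>v g)"
        using prems(3) g h unfolding eigv_def by auto
      also have "\<dots> = \<mu> h \<cdot>\<^sub>v z'"
        unfolding z'eq using zc g by (intro eq_vecI) (auto simp: algebra_simps)
      finally show "H h *\<^sub>v z' = \<mu> h \<cdot>\<^sub>v z'" .
    qed
    then obtain b where b: "z' = b \<cdot>\<^sub>v g" using less.hyps[of "ys0" z'] okr z'_def Cons by auto
    have "z = (a1 + b) \<cdot>\<^sub>v g"
    proof (rule eq_vecI)
      fix i assume "i < dim_vec ((a1 + b) \<cdot>\<^sub>v g)"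
      hence i: "i < D" using g by auto
      have "(z - a1 \<cdot>\<^sub>v g) $ i = (b \<cdot>\<^sub>v g) $ i" using b z'eq by simp
      then show "z $ i = ((a1 + b) \<cdot>\<^sub>v g) $ i" using i zc g by (simp add: algebra_simps)
    qed (use zc g in auto)
    then show ?thesis by blast
  next
    case True
    then obtain h1 where h1: "h1 \<in> cartan n" "\<nu>1 h1 \<noteq> \<mu> h1" by auto
    define \<delta> where "\<delta> = \<mu> h1 - \<nu>1 h1"
    have \<delta>: "\<delta> \<noteq> 0" using h1 unfolding \<delta>_def by auto
    define ys0' where "ys0' = map (\<lambda>(y,\<nu>). ((\<nu> h1 - \<nu>1 h1) \<cdot>\<^sub>v y, \<nu>)) ys0"
    have okr': "\<forall>p\<in>set ys0'. okitem n D H \<mu> g p"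
    proof
      fix q assume "q \<in> set ys0'"
      then obtain y \<nu> where q: "q = ((\<nu> h1 - \<nu>1 h1) \<cdot>\<^sub>v y, \<nu>)" and yn: "(y,\<nu>) \<in> set ys0"
        unfolding ys0'_def by auto
      have ok: "okitem n D H \<mu> g (y, \<nu>)" using okr yn by auto
      have yc: "y \<in> carrier_vec D" using ok unfolding okitem_def by auto
      have "eigv n H ((\<nu> h1 - \<nu>1 h1) \<cdot>\<^sub>v y) \<nu>"
        using ok yc unfolding okitem_def by (auto intro: eigv_smult[OF Hc])
      moreover have "(\<exists>h\<in>cartan n. \<nu> h \<noteq> \<mu> h) \<or> (\<exists>a. (\<nu> h1 - \<nu>1 h1) \<cdot>\<^sub>v y = a \<cdot>\<^sub>v g \<and> (\<forall>h\<in>cartan n. \<nu> h = \<mu> h))"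
      proof -
        have "(\<exists>h\<in>cartan n. \<nu> h \<noteq> \<mu> h) \<or> (\<exists>a. y = a \<cdot>\<^sub>v g \<and> (\<forall>h\<in>cartan n. \<nu> h = \<mu> h))"
          using ok unfolding okitem_def by simp
        then show ?thesis
        proof
          assume "\<exists>a. y = a \<cdot>\<^sub>v g \<and> (\<forall>h\<in>cartan n. \<nu> h = \<mu> h)"
          then obtain a where "y = a \<cdot>\<^sub>v g" "\<forall>h\<in>cartan n. \<nu> h = \<mu> h" by blast
          then have "(\<nu> h1 - \<nu>1 h1) \<cdot>\<^sub>v y = ((\<nu> h1 - \<nu>1 h1) * a) \<cdot>\<^sub>v g \<and> (\<forall>h\<in>cartan n. \<nu> h = \<mu> h)"
            by (simp add: smult_smult_assoc)
          then show ?thesis by blast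
        qed simp
      qed
      ultimately show "okitem n D H \<mu> g q" unfolding q okitem_def using yc by auto
    qed
    have ysc': "set (map fst ys0') \<subseteq> carrier_vec D" using okr' unfolding okitem_def by auto
    define z' where "z' = \<delta> \<cdot>\<^sub>v z"
    have Hz: "H h1 *\<^sub>v z = \<mu> h1 \<cdot>\<^sub>v z" using prems(3) h1 unfolding eigv_def by auto
    have Hy1: "H h1 *\<^sub>v y1 = \<nu>1 h1 \<cdot>\<^sub>v y1" using ok1 h1 unfolding okitem_def eigv_def by auto
    have Hys: "\<forall>(y,\<nu>)\<in>set ys0. H h1 *\<^sub>v y = \<nu> h1 \<cdot>\<^sub>v y" using okr h1 unfolding okitem_def eigv_def by auto
    have "z' = vsum D (map fst ys0')"
    proof (rule eq_vecI)
      fix a assume "a < dim_vec (vsum D (map fst ys0'))"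
      hence a: "a < D" using vsum_carrier[OF ysc'] by auto
      have HD: "dim_row (H h1) = D" using Hc[OF h1(1)] by auto
      have hv: "H h1 *\<^sub>v z = H h1 *\<^sub>v y1 + vsum D (map (\<lambda>x. H h1 *\<^sub>v x) (map fst ys0))"
        unfolding zeq using Hc[OF h1(1)] y1c vsum_carrier[OF ysc]
        by (simp add: mult_add_distrib_mat_vec[of _ D D] mat_vsum[OF Hc[OF h1(1)] ysc] del: map_map)
      have hvc: "vsum D (map (\<lambda>x. H h1 *\<^sub>v x) (map fst ys0)) \<in> carrier_vec D"
        by (rule vsum_carrier[OF set_map_mult_carrier[OF HD]])
      have "(H h1 *\<^sub>v z) $ a = (H h1 *\<^sub>v y1) $ a + vsum D (map (\<lambda>x. H h1 *\<^sub>v x) (map fst ys0)) $ a"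
        unfolding hv using hvc a by (intro index_add_vec) auto
      also have "vsum D (map (\<lambda>x. H h1 *\<^sub>v x) (map fst ys0)) $ a = sum_list (map (\<lambda>(y,\<nu>). \<nu> h1 * y $ a) ys0)"
      proof -
        have "set (map (\<lambda>x. H h1 *\<^sub>v x) (map fst ys0)) \<subseteq> carrier_vec D"
          by (rule set_map_mult_carrier[OF HD])
        then have "vsum D (map (\<lambda>x. H h1 *\<^sub>v x) (map fst ys0)) $ a = sum_list (map (\<lambda>x. x $ a) (map (\<lambda>x. H h1 *\<^sub>v x) (map fst ys0)))"
          by (rule vsum_index[OF _ a])
        also have "\<dots> = sum_list (map (\<lambda>x. (H h1 *\<^sub>v x) $ a) (map fst ys0))"
          by (simp only: map_map o_def)
        also have "\<dots> = sum_list (map (\<lambda>(y,\<nu>). \<nu> h1 * y $ a) ys0)"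
        proof (rule sum_list_fst_cong)
          fix p assume p: "p \<in> set ys0"
          obtain y \<nu> where pe: "p = (y, \<nu>)" by (cases p)
          have "H h1 *\<^sub>v y = \<nu> h1 \<cdot>\<^sub>v y" using Hys p pe by auto
          moreover have "y \<in> carrier_vec D" using ysc p pe by auto
          ultimately show "(H h1 *\<^sub>v fst p) $ a = (case p of (y, \<nu>) \<Rightarrow> \<nu> h1 * y $ a)" using pe a by simp
        qed
        finally show ?thesis .
      qed
      finally have e1: "\<mu> h1 * z $ a = \<nu>1 h1 * y1 $ a + sum_list (map (\<lambda>(y,\<nu>). \<nu> h1 * y $ a) ys0)"
        unfolding Hz Hy1 using a zc y1c by simp
      have e2: "z $ a = y1 $ a + sum_list (map (\<lambda>(y,\<nu>). y $ a) ys0)"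
        unfolding zeq using a y1c vsum_carrier[OF ysc] vsum_index[OF ysc a] by (simp add: case_prod_unfold o_def)
      have e3: "vsum D (map fst ys0') $ a = sum_list (map (\<lambda>(y,\<nu>). (\<nu> h1 - \<nu>1 h1) * y $ a) ys0)"
        proof -
        have dims: "\<And>y \<nu>. (y,\<nu>) \<in> set ys0 \<Longrightarrow> dim_vec y = D" using ysc by force
        show ?thesis
          using vsum_index[OF ysc' a] a dims unfolding ys0'_def by (auto simp: o_def case_prod_beta intro!: arg_cong[where f=sum_list])
      qed
      have S: "sum_list (map (\<lambda>(y,\<nu>). (\<nu> h1 - \<nu>1 h1) * y $ a) ys0) = sum_list (map (\<lambda>(y,\<nu>). \<nu> h1 * y $ a) ys0) - \<nu>1 h1 * sum_list (map (\<lambda>(y,\<nu>). y $ a) ys0)"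
        by (induction ys0) (auto simp: algebra_simps)
      have key: "\<And>Z Y S1 S0. \<mu> h1 * Z = \<nu>1 h1 * Y + S1 \<Longrightarrow> Z = Y + S0 \<Longrightarrow> (\<mu> h1 - \<nu>1 h1) * Z = S1 - \<nu>1 h1 * S0"
        by (simp add: algebra_simps)
      have "z' $ a = \<delta> * z $ a" unfolding z'_def using a zc by simp
      also have "\<dots> = (\<mu> h1 - \<nu>1 h1) * z $ a" unfolding \<delta>_def ..
      also have "\<dots> = sum_list (map (\<lambda>(y,\<nu>). \<nu> h1 * y $ a) ys0) - \<nu>1 h1 * sum_list (map (\<lambda>(y,\<nu>). y $ a) ys0)"
        by (rule key[OF e1 e2])
      also have "\<dots> = vsum D (map fst ys0') $ a" unfolding e3 S ..
      finally show "z' $ a = vsum D (map fst ys0') $ a" .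
    qed (use zc vsum_carrier[OF ysc'] in \<open>auto simp: z'_def\<close>)
    moreover have "eigv n H z' \<mu>"
      using prems(3) zc unfolding z'_def by (intro eigv_smult[OF Hc])
    ultimately obtain b where b: "z' = b \<cdot>\<^sub>v g" using less.hyps[of "ys0'" z'] okr' Cons by (auto simp: ys0'_def)
    have "z = (b / \<delta>) \<cdot>\<^sub>v g"
    proof (rule eq_vecI)
      fix i assume "i < dim_vec ((b / \<delta>) \<cdot>\<^sub>v g)"
      hence i: "i < D" using g by auto
      have "(\<delta> \<cdot>\<^sub>v z) $ i = (b \<cdot>\<^sub>v g) $ i" using b unfolding z'_def by simp
      then show "z $ i = ((b / \<delta>) \<cdot>\<^sub>v g) $ i" using i zc g \<delta> by (simp add: field_simps)
    qed (use zc g in auto)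
    then show ?thesis by blast
  qed
qed
qed


lemma pow_mat_vec_iter:
  fixes F :: "complex mat"
  assumes F: "F \<in> carrier_mat m m"
  shows "w \<in> carrier_vec m \<Longrightarrow> (F ^\<^sub>m k) *\<^sub>v w = ((\<lambda>x. F *\<^sub>v x) ^^ k) w"
proof (induction k arbitrary: w)
  case 0 then show ?case using F by simp
next
  case (Suc k)
  have "(F ^\<^sub>m Suc k) *\<^sub>v w = (F ^\<^sub>m k * F) *\<^sub>v w" by simp
  also have "\<dots> = (F ^\<^sub>m k) *\<^sub>v (F *\<^sub>v w)" using F Suc.prems by (intro assoc_mult_mat_vec) auto
  also have "\<dots> = ((\<lambda>x. F *\<^sub>v x) ^^ k) (F *\<^sub>v w)" by (rule Suc.IH) (use F Suc.prems in auto)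
  finally show ?case by (simp only: funpow_Suc_right o_apply)
qed

lemma sl2_lemma:
  fixes E F Hh :: "complex mat" and u :: "complex vec"
  assumes E: "E \<in> carrier_mat m m" and F: "F \<in> carrier_mat m m" and Hh: "Hh \<in> carrier_mat m m"
    and EF: "E * F - F * E = Hh" and HF: "Hh * F - F * Hh = (-2) \<cdot>\<^sub>m F"
    and u: "u \<in> carrier_vec m" "u \<noteq> 0\<^sub>v m" and Eu: "E *\<^sub>v u = 0\<^sub>v m" and Hu: "Hh *\<^sub>v u = of_nat M \<cdot>\<^sub>v u"
  shows "(F ^\<^sub>m (M+1)) *\<^sub>v u = 0\<^sub>v m"
proof -
  define U where "U = (\<lambda>k. ((\<lambda>x. F *\<^sub>v x) ^^ k) u)"
  have U0: "U 0 = u" and US: "\<And>k. U (Suc k) = F *\<^sub>v U k" by (simp_all add: U_def)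
  have Uc: "U k \<in> carrier_vec m" for k using F u by (induction k) (auto simp: US U0)
  have FH: "F *\<^sub>v (Hh *\<^sub>v w) = Hh *\<^sub>v (F *\<^sub>v w) + 2 \<cdot>\<^sub>v (F *\<^sub>v w)" if w: "w \<in> carrier_vec m" for w
  proof -
    have "(Hh * F - F * Hh) *\<^sub>v w = Hh *\<^sub>v (F *\<^sub>v w) - F *\<^sub>v (Hh *\<^sub>v w)"
      using Hh F w by (simp add: minus_mult_distrib_mat_vec[of _ m m])
    moreover have "(Hh * F - F * Hh) *\<^sub>v w = (-2) \<cdot>\<^sub>v (F *\<^sub>v w)" unfolding HF
      using F w by (intro eq_vecI) (auto simp: scalar_prod_def sum_distrib_left mult.assoc)
    ultimately have e: "Hh *\<^sub>v (F *\<^sub>v w) - F *\<^sub>v (Hh *\<^sub>v w) = (-2) \<cdot>\<^sub>v (F *\<^sub>v w)" by simp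
    show ?thesis
    proof (rule eq_vecI)
      fix i assume "i < dim_vec (Hh *\<^sub>v (F *\<^sub>v w) + 2 \<cdot>\<^sub>v (F *\<^sub>v w))"
      hence i: "i < m" using Hh F by auto
      have "(Hh *\<^sub>v (F *\<^sub>v w) - F *\<^sub>v (Hh *\<^sub>v w)) $ i = ((-2) \<cdot>\<^sub>v (F *\<^sub>v w)) $ i" using e by simp
      then show "(F *\<^sub>v (Hh *\<^sub>v w)) $ i = (Hh *\<^sub>v (F *\<^sub>v w) + 2 \<cdot>\<^sub>v (F *\<^sub>v w)) $ i"
        using i F Hh by (simp add: algebra_simps)
    qed (use F Hh in auto)
  qed
  have EF': "E *\<^sub>v (F *\<^sub>v w) = F *\<^sub>v (E *\<^sub>v w) + Hh *\<^sub>v w" if w: "w \<in> carrier_vec m" for w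
  proof -
    have "(E * F - F * E) *\<^sub>v w = E *\<^sub>v (F *\<^sub>v w) - F *\<^sub>v (E *\<^sub>v w)"
      using E F w by (simp add: minus_mult_distrib_mat_vec[of _ m m])
    then have e: "E *\<^sub>v (F *\<^sub>v w) - F *\<^sub>v (E *\<^sub>v w) = Hh *\<^sub>v w" using EF by simp
    show ?thesis
    proof (rule eq_vecI)
      fix i assume "i < dim_vec (F *\<^sub>v (E *\<^sub>v w) + Hh *\<^sub>v w)"
      hence i: "i < m" using F Hh by auto
      have "(E *\<^sub>v (F *\<^sub>v w) - F *\<^sub>v (E *\<^sub>v w)) $ i = (Hh *\<^sub>v w) $ i" using e by simp
      then show "(E *\<^sub>v (F *\<^sub>v w)) $ i = (F *\<^sub>v (E *\<^sub>v w) + Hh *\<^sub>v w) $ i"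
        using i F Hh E by (simp add: algebra_simps)
    qed (use E F Hh in auto)
  qed
  have HU: "Hh *\<^sub>v U k = (of_nat M - 2 * of_nat k) \<cdot>\<^sub>v U k" for k
  proof (induction k)
    case 0 then show ?case using Hu by (simp add: U0)
  next
    case (Suc k)
    have "Hh *\<^sub>v U (Suc k) = F *\<^sub>v (Hh *\<^sub>v U k) - 2 \<cdot>\<^sub>v (F *\<^sub>v U k)"
      unfolding US using FH[OF Uc[of k]] F Hh Uc[of k] by (intro eq_vecI) auto
    also have "\<dots> = (of_nat M - 2 * of_nat (Suc k)) \<cdot>\<^sub>v U (Suc k)"
      unfolding Suc US mult_mat_vec[OF F Uc] using F Uc[of k] by (intro eq_vecI) (auto simp: algebra_simps)
    finally show ?case .
  qed
  have EU: "E *\<^sub>v U (Suc k) = (of_nat (Suc k) * (of_nat M - of_nat k)) \<cdot>\<^sub>v U k" for k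
  proof (induction k)
    case 0
    have "E *\<^sub>v U (Suc 0) = F *\<^sub>v (E *\<^sub>v u) + Hh *\<^sub>v u" unfolding US U0 by (rule EF'[OF u(1)])
    moreover have "F *\<^sub>v 0\<^sub>v m = 0\<^sub>v m" using F by auto
    ultimately show ?case using Eu Hu F u by (simp add: U0)
  next
    case (Suc k)
    have "E *\<^sub>v U (Suc (Suc k)) = F *\<^sub>v (E *\<^sub>v U (Suc k)) + Hh *\<^sub>v U (Suc k)"
      unfolding US[of "Suc k"] by (rule EF'[OF Uc])
    also have "\<dots> = F *\<^sub>v ((of_nat (Suc k) * (of_nat M - of_nat k)) \<cdot>\<^sub>v U k) + (of_nat M - 2 * of_nat (Suc k)) \<cdot>\<^sub>v U (Suc k)"
      by (simp only: Suc HU)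
    also have "\<dots> = (of_nat (Suc k) * (of_nat M - of_nat k)) \<cdot>\<^sub>v U (Suc k) + (of_nat M - 2 * of_nat (Suc k)) \<cdot>\<^sub>v U (Suc k)"
      by (simp only: mult_mat_vec[OF F Uc] US)
    also have "\<dots> = (of_nat (Suc (Suc k)) * (of_nat M - of_nat (Suc k))) \<cdot>\<^sub>v U (Suc k)"
      using Uc[of "Suc k"] by (intro eq_vecI) (auto simp: algebra_simps)
    finally show ?case .
  qed
  have ex: "\<exists>k. U k = 0\<^sub>v m"
  proof (rule ccontr)
    assume "\<not> ?thesis"
    then have nz: "U k \<noteq> 0\<^sub>v m" for k by auto
    have "eigenvalue Hh (of_nat M - 2 * of_nat k)" for k
      unfolding eigenvalue_def eigenvector_def using nz[of k] Uc[of k] HU[of k] Hh by auto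
    then have sub: "range (\<lambda>k. (of_nat M - 2 * of_nat k :: complex)) \<subseteq> {x. poly (char_poly Hh) x = 0}"
      using eigenvalue_root_char_poly[OF Hh] by auto
    have "char_poly Hh \<noteq> 0" using degree_monic_char_poly[OF Hh] by auto
    then have "finite {x. poly (char_poly Hh) x = 0}" by (rule poly_roots_finite)
    then have "finite (range (\<lambda>k. (of_nat M - 2 * of_nat k :: complex)))" using sub finite_subset by blast
    moreover have "inj (\<lambda>k. (of_nat M - 2 * of_nat k :: complex))" by (auto simp: inj_def)
    ultimately show False using finite_imageD by (metis infinite_UNIV_nat)
  qed
  define K where "K = (LEAST k. U k = 0\<^sub>v m)"
  have UK: "U K = 0\<^sub>v m" unfolding K_def using LeastI_ex[OF ex] .
  have K0: "K \<noteq> 0" using UK u by (auto simp: U0)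
  then obtain k where Kk: "K = Suc k" by (cases K) auto
  have Uk: "U k \<noteq> 0\<^sub>v m" using not_less_Least[of k "\<lambda>k. U k = 0\<^sub>v m"] Kk K_def by auto
  have "(of_nat (Suc k) * (of_nat M - of_nat k)) \<cdot>\<^sub>v U k = 0\<^sub>v m"
  proof -
    have "E *\<^sub>v 0\<^sub>v m = 0\<^sub>v m" using E by auto
    then show ?thesis using EU[of k] UK Kk by simp
  qed
  moreover have "\<exists>i<m. U k $ i \<noteq> 0" using Uk Uc[of k] by (auto simp: vec_eq_iff)
  ultimately have "of_nat (Suc k) * (of_nat M - of_nat k) = (0::complex)"
    using Uc[of k] by (auto dest!: arg_cong[where f="\<lambda>v. v $ _"] simp: vec_eq_iff)
  moreover have "(of_nat (Suc k) :: complex) \<noteq> 0" by (simp del: of_nat_Suc)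
  ultimately have "(of_nat M :: complex) - of_nat k = 0" by simp
  then have "(of_nat M :: complex) = of_nat k" by simp
  then have "M = k" by simp
  then have "K = M + 1" using Kk by simp
  then have "U (M + 1) = 0\<^sub>v m" using UK by simp
  moreover have "(F ^\<^sub>m (M+1)) *\<^sub>v u = U (M+1)" unfolding U_def by (rule pow_mat_vec_iter[OF F u(1)])
  ultimately show ?thesis by simp
qed


lemma vsum_append: "set xs \<subseteq> carrier_vec D \<Longrightarrow> set ys \<subseteq> carrier_vec D \<Longrightarrow> vsum D (xs @ ys) = vsum D xs + vsum D ys"
proof (induction xs)
  case Nil
  then show ?case using vsum_carrier[of ys D] by auto
next
  case (Cons x xs)
  then have "vsum D xs \<in> carrier_vec D" "vsum D ys \<in> carrier_vec D" "x \<in> carrier_vec D" using vsum_carrier by auto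
  then show ?case using Cons by (simp add: assoc_add_vec)
qed

lemma vsum_smult: "set xs \<subseteq> carrier_vec D \<Longrightarrow> a \<cdot>\<^sub>v vsum D xs = vsum D (map (\<lambda>x. a \<cdot>\<^sub>v x) xs)"
proof (induction xs)
  case Nil
  then show ?case by auto
next
  case (Cons x xs)
  then have "vsum D xs \<in> carrier_vec D" "x \<in> carrier_vec D" using vsum_carrier by auto
  then show ?case using Cons by (simp add: smult_add_distrib_vec)
qed

lemma vspan_list:
  assumes Mc: "fst ` M \<subseteq> carrier_vec D" and u: "u \<in> vspan D (fst ` M)"
  shows "\<exists>ts. set (map snd ts) \<subseteq> M \<and> u = vsum D (map (\<lambda>(a,p). a \<cdot>\<^sub>v fst p) ts)"
  using u
proof (induction rule: vspan.induct)
  case zero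
  show ?case by (rule exI[of _ "[]"]) simp
next
  case (gen s)
  then obtain p where p: "p \<in> M" "s = fst p" by auto
  have sc: "s \<in> carrier_vec D" using Mc gen by auto
  have "s = vsum D (map (\<lambda>(a,p). a \<cdot>\<^sub>v fst p) [(1,p)])" using p sc by auto
  then show ?case using p by (intro exI[of _ "[(1,p)]"]) auto
next
  case (lin u w a b)
  from lin.IH obtain ts1 ts2 where t1: "set (map snd ts1) \<subseteq> M" "u = vsum D (map (\<lambda>(a,p). a \<cdot>\<^sub>v fst p) ts1)"
    and t2: "set (map snd ts2) \<subseteq> M" "w = vsum D (map (\<lambda>(a,p). a \<cdot>\<^sub>v fst p) ts2)" by blast
  define ts where "ts = map (\<lambda>(c,p). (a*c,p)) ts1 @ map (\<lambda>(c,p). (b*c,p)) ts2"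
  have c1: "set (map (\<lambda>(a,p). a \<cdot>\<^sub>v fst p) ts1) \<subseteq> carrier_vec D" using t1 Mc by force
  have c2: "set (map (\<lambda>(a,p). a \<cdot>\<^sub>v fst p) ts2) \<subseteq> carrier_vec D" using t2 Mc by force
  have "a \<cdot>\<^sub>v u + b \<cdot>\<^sub>v w = vsum D (map (\<lambda>x. a \<cdot>\<^sub>v x) (map (\<lambda>(a,p). a \<cdot>\<^sub>v fst p) ts1)) + vsum D (map (\<lambda>x. b \<cdot>\<^sub>v x) (map (\<lambda>(a,p). a \<cdot>\<^sub>v fst p) ts2))"
    unfolding t1(2) t2(2) using vsum_smult[OF c1] vsum_smult[OF c2] by simp
  also have "\<dots> = vsum D (map (\<lambda>(a,p). a \<cdot>\<^sub>v fst p) ts)"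
    unfolding ts_def map_append using c1 c2
    by (subst vsum_append) (auto simp: smult_smult_assoc case_prod_beta o_def)
  finally show ?case using t1 t2 unfolding ts_def by (intro exI[of _ ts]) (auto simp: ts_def)
qed


lemma hom_image_all:
  assumes irr: "is_simple_hw n tau m sigma" and r: "current_rep n d rho"
    and psi: "\<psi> \<in> hom_sl n d rho m sigma" and nz: "\<psi> \<noteq> 0\<^sub>m m d"
    and y: "y \<in> carrier_vec m"
  shows "\<exists>x\<in>carrier_vec d. y = \<psi> *\<^sub>v x"
proof -
  have pc: "\<psi> \<in> carrier_mat m d" and pe: "\<And>x. x \<in> sl n \<Longrightarrow> \<psi> * rho x 0 = sigma x * \<psi>"
    using psi unfolding hom_sl_def by auto
  have sr: "sl_rep n m sigma" using irr unfolding is_simple_hw_def by auto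
  define W where "W = {y. \<exists>x\<in>carrier_vec d. y = \<psi> *\<^sub>v x}"
  have ls: "lin_subspace m W"
    unfolding lin_subspace_def
  proof (intro conjI ballI allI)
    show "W \<subseteq> carrier_vec m" unfolding W_def using pc by auto
    have "\<psi> *\<^sub>v 0\<^sub>v d = 0\<^sub>v m" using pc by auto
    then show "0\<^sub>v m \<in> W" unfolding W_def by (intro CollectI bexI[of _ "0\<^sub>v d"]) auto
  next
    fix u w assume "u \<in> W" "w \<in> W"
    then obtain x1 x2 where x: "x1 \<in> carrier_vec d" "x2 \<in> carrier_vec d" "u = \<psi> *\<^sub>v x1" "w = \<psi> *\<^sub>v x2"
      unfolding W_def by auto
    then have "u + w = \<psi> *\<^sub>v (x1 + x2)" using pc by (simp add: mult_add_distrib_mat_vec[of _ m d])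
    then show "u + w \<in> W" unfolding W_def using x by auto
  next
    fix c u assume "u \<in> W"
    then obtain x1 where x: "x1 \<in> carrier_vec d" "u = \<psi> *\<^sub>v x1" unfolding W_def by auto
    then have "c \<cdot>\<^sub>v u = \<psi> *\<^sub>v (c \<cdot>\<^sub>v x1)" using pc by (simp add: mult_mat_vec)
    then show "c \<cdot>\<^sub>v u \<in> W" unfolding W_def using x by auto
  qed
  have inv: "\<forall>x\<in>sl n. \<forall>u\<in>W. sigma x *\<^sub>v u \<in> W"
  proof (intro ballI)
    fix x u assume x: "x \<in> sl n" and "u \<in> W"
    then obtain x1 where x1: "x1 \<in> carrier_vec d" "u = \<psi> *\<^sub>v x1" unfolding W_def by auto
    have sc: "sigma x \<in> carrier_mat m m" using sr x unfolding sl_rep_def by auto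
    have rc: "rho x 0 \<in> carrier_mat d d" using rep_carrier[OF r x] .
    have "sigma x *\<^sub>v u = (sigma x * \<psi>) *\<^sub>v x1" using x1 sc pc by simp
    also have "\<dots> = (\<psi> * rho x 0) *\<^sub>v x1" using pe[OF x] by simp
    also have "\<dots> = \<psi> *\<^sub>v (rho x 0 *\<^sub>v x1)" using x1 rc pc by simp
    finally show "sigma x *\<^sub>v u \<in> W" unfolding W_def using rc x1 by auto
  qed
  have "W = {0\<^sub>v m} \<or> W = carrier_vec m" using irr ls inv unfolding is_simple_hw_def by blast
  moreover have "W \<noteq> {0\<^sub>v m}"
  proof
    assume W0: "W = {0\<^sub>v m}"
    have "\<psi> = 0\<^sub>m m d"
    proof (rule eq_matI)
      fix i j assume i: "i < dim_row (0\<^sub>m m d)" and j: "j < dim_col (0\<^sub>m m d)"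
      have "\<psi> *\<^sub>v unit_vec d j \<in> W" unfolding W_def by auto
      then have "\<psi> *\<^sub>v unit_vec d j = 0\<^sub>v m" using W0 by auto
      then have "(\<psi> *\<^sub>v unit_vec d j) $ i = 0" using i by simp
      moreover have "(\<psi> *\<^sub>v unit_vec d j) $ i = \<psi> $$ (i,j)" using i j pc by simp
      ultimately show "\<psi> $$ (i,j) = 0\<^sub>m m d $$ (i,j)" using i j by simp
    qed (use pc in auto)
    then show False using nz by simp
  qed
  ultimately have "W = carrier_vec m" by simp
  then show ?thesis using y unfolding W_def by auto
qed

lemma hom_eigv:
  assumes r: "current_rep n d rho" and hw: "hwv n d rho v lam" and m: "(w, c) \<in> Mon n rho v"
    and psi: "\<psi> \<in> hom_sl n d rho m sigma" and sr: "sl_rep n m sigma"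
  shows "eigv n sigma (\<psi> *\<^sub>v w) (\<lambda>h. weight_eval n lam h - alpha_sum n c h)"
  unfolding eigv_def
proof
  fix h assume h: "h \<in> cartan n"
  have pc: "\<psi> \<in> carrier_mat m d" and pe: "\<psi> * rho h 0 = sigma h * \<psi>"
    using psi cartan_sl[OF h] unfolding hom_sl_def by auto
  have v: "v \<in> carrier_vec d" using hw by (simp add: hwv_def)
  have wc: "w \<in> carrier_vec d" using Mon_carrier[OF r v m] .
  have rc: "rho h 0 \<in> carrier_mat d d" using rep_carrier[OF r cartan_sl[OF h]] .
  have sc: "sigma h \<in> carrier_mat m m" using sr cartan_sl[OF h] unfolding sl_rep_def by auto
  have "sigma h *\<^sub>v (\<psi> *\<^sub>v w) = (sigma h * \<psi>) *\<^sub>v w"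
    using pc wc sc by simp
  also have "\<dots> = (\<psi> * rho h 0) *\<^sub>v w" using pe by simp
  also have "\<dots> = \<psi> *\<^sub>v (rho h 0 *\<^sub>v w)" using pc rc wc by simp
  also have "\<dots> = \<psi> *\<^sub>v ((weight_eval n lam h - alpha_sum n c h) \<cdot>\<^sub>v w)" using Mon_weight[OF r hw m h] by simp
  also have "\<dots> = (weight_eval n lam h - alpha_sum n c h) \<cdot>\<^sub>v (\<psi> *\<^sub>v w)" using pc wc by (simp add: mult_mat_vec)
  finally show "sigma h *\<^sub>v (\<psi> *\<^sub>v w) = (weight_eval n lam h - alpha_sum n c h) \<cdot>\<^sub>v (\<psi> *\<^sub>v w)" .
qed


lemma gauss_complex: "(\<Sum>i<n. (of_nat i :: complex)) = of_nat n * (of_nat n - 1) / 2"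
  by (induction n) (auto simp: field_simps)

definition hzero :: "nat \<Rightarrow> complex mat" where
  "hzero n = mat n n (\<lambda>(i,j). if i = j then (of_nat n - 1) / 2 - of_nat i else 0)"

lemma hzero_cartan: "hzero n \<in> cartan n"
proof -
  have "mtrace (hzero n) = (\<Sum>i<n. ((of_nat n - 1) / 2 - of_nat i))"
    unfolding mtrace_def hzero_def by simp
  also have "\<dots> = of_nat n * ((of_nat n - 1) / 2) - (\<Sum>i<n. (of_nat i :: complex))"
    by (simp add: sum_subtractf)
  also have "\<dots> = 0" unfolding gauss_complex by (simp add: field_simps)
  finally show ?thesis unfolding cartan_def sl_def by (auto simp: hzero_def)
qed

lemma alpha_sum_hzero: "alpha_sum n c (hzero n) = of_nat (\<Sum>l<n-1. c l)"
proof -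
  have "alpha_sum n c (hzero n) = (\<Sum>l<n-1. of_nat (c l))"
    unfolding alpha_sum_def hzero_def by (intro sum.cong) (auto simp: field_simps)
  then show ?thesis by simp
qed

lemma Mon_zero:
  assumes "(w, c) \<in> Mon n rho v"
  shows "w = v \<or> (\<exists>l<n-1. c l \<ge> 1)"
  using assms
proof (induction rule: Mon.induct)
  case base then show ?case by simp
next
  case (step w c i j k)
  then have "i < n - 1" "incr i j c i \<ge> 1" by (auto simp: incr_def)
  then show ?case by blast
qed

lemma good_is_base:
  assumes m: "(w, c) \<in> Mon n rho v" and eq: "\<forall>h\<in>cartan n. alpha_sum n c h = 0"
  shows "w = v"
proof -
  have "of_nat (\<Sum>l<n-1. c l) = (0::complex)" using eq hzero_cartan[of n] alpha_sum_hzero[of n c] by simp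
  then have "(\<Sum>l<n-1. c l) = 0" by (metis of_nat_eq_0_iff)
  then have "\<forall>l<n-1. c l = 0" by simp
  then show ?thesis using Mon_zero[OF m] by force
qed

definition ev :: "(complex mat \<Rightarrow> complex mat) \<Rightarrow> nat \<Rightarrow> complex mat \<Rightarrow> nat \<Rightarrow> complex mat" where
  "ev sigma m = (\<lambda>x k. if k = 0 then sigma x else 0\<^sub>m m m)"

lemma ev_current_rep:
  assumes sr: "sl_rep n m sigma"
  shows "current_rep n m (ev sigma m)"
proof -
  have sc: "\<And>x. x \<in> sl n \<Longrightarrow> sigma x \<in> carrier_mat m m" using sr unfolding sl_rep_def by auto
  have sl: "\<And>x y a b. x \<in> sl n \<Longrightarrow> y \<in> sl n \<Longrightarrow> sigma (a \<cdot>\<^sub>m x + b \<cdot>\<^sub>m y) = a \<cdot>\<^sub>m sigma x + b \<cdot>\<^sub>m sigma y"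
    using sr unfolding sl_rep_def by auto
  have sb: "\<And>x y. x \<in> sl n \<Longrightarrow> y \<in> sl n \<Longrightarrow> sigma x * sigma y - sigma y * sigma x = sigma (x * y - y * x)"
    using sr unfolding sl_rep_def by auto
  show ?thesis unfolding current_rep_def
  proof (intro conjI ballI allI)
    fix x k assume "x \<in> sl n" then show "ev sigma m x k \<in> carrier_mat m m" using sc by (auto simp: ev_def)
  next
    fix x y a b k assume x: "x \<in> sl n" and y: "y \<in> sl n"
    show "ev sigma m (a \<cdot>\<^sub>m x + b \<cdot>\<^sub>m y) k = a \<cdot>\<^sub>m ev sigma m x k + b \<cdot>\<^sub>m ev sigma m y k"
      using sl[OF x y] by (auto simp: ev_def intro!: eq_matI)
  next
    fix x y k l assume x: "x \<in> sl n" and y: "y \<in> sl n"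
    show "ev sigma m x k * ev sigma m y l - ev sigma m y l * ev sigma m x k = ev sigma m (x * y - y * x) (k + l)"
    proof (cases "k = 0 \<and> l = 0")
      case True then show ?thesis using sb[OF x y] by (simp add: ev_def)
    next
      case False
      then show ?thesis using sc[OF x] sc[OF y] by (auto simp: ev_def intro!: eq_matI)
    qed
  qed
qed


lemma h_root_cartan: assumes "i < n" "j < n" "i \<noteq> j" shows "h_root n i j \<in> cartan n"
proof -
  have "mtrace (h_root n i j) = (\<Sum>k<n. (if k = i then 1 else 0) - (if k = j then 1 else 0))"
    unfolding mtrace_def h_root_def by (intro sum.cong) auto
  also have "\<dots> = 0" using assms by (simp add: sum_subtractf)
  finally show ?thesis unfolding cartan_def sl_def h_root_def by auto
qed

lemma h_root_idx: assumes "i < n" "j < n" "i \<noteq> j"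
  shows "h_root n i j $$ (i,i) = 1" "h_root n i j $$ (j,j) = -1"
  using assms by (auto simp: h_root_def)

lemma sl_rep_smult:
  assumes r: "sl_rep n m sigma" and x: "x \<in> sl n"
  shows "sigma (a \<cdot>\<^sub>m x) = a \<cdot>\<^sub>m sigma x"
proof -
  have xc: "x \<in> carrier_mat n n" using x unfolding sl_def by auto
  have sc: "sigma x \<in> carrier_mat m m" using r x unfolding sl_rep_def by auto
  have "a \<cdot>\<^sub>m x + 0 \<cdot>\<^sub>m x = a \<cdot>\<^sub>m x" using xc by (intro eq_matI) auto
  moreover have "sigma (a \<cdot>\<^sub>m x + 0 \<cdot>\<^sub>m x) = a \<cdot>\<^sub>m sigma x + 0 \<cdot>\<^sub>m sigma x"
    using r x unfolding sl_rep_def by blast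
  moreover have "a \<cdot>\<^sub>m sigma x + 0 \<cdot>\<^sub>m sigma x = a \<cdot>\<^sub>m sigma x"
    using sc by (intro eq_matI) auto
  ultimately show ?thesis by simp
qed

lemma zero_pow_mat: "(0\<^sub>m m m :: complex mat) ^\<^sub>m (Suc k) = 0\<^sub>m m m"
  by (induction k) auto

lemma ev_F_rels:
  assumes sr: "sl_rep n m sigma" and u: "u \<in> carrier_vec m" "u \<noteq> 0\<^sub>v m"
    and un: "\<forall>x\<in>npos n. sigma x *\<^sub>v u = 0\<^sub>v m"
    and uh: "\<forall>h\<in>cartan n. sigma h *\<^sub>v u = weight_eval n (\<lambda>i. lam1 i + lam2 i) h \<cdot>\<^sub>v u"
  shows "F_rels n lam1 lam2 m (ev sigma m) u"
proof -
  have sc: "\<And>x. x \<in> sl n \<Longrightarrow> sigma x \<in> carrier_mat m m" using sr unfolding sl_rep_def by auto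
  have sb: "\<And>x y. x \<in> sl n \<Longrightarrow> y \<in> sl n \<Longrightarrow> sigma x * sigma y - sigma y * sigma x = sigma (x * y - y * x)"
    using sr unfolding sl_rep_def by auto
  have z: "0\<^sub>m m m *\<^sub>v u = 0\<^sub>v m" using u by auto
  have f0: "(ev sigma m (f_root n i j) 0 ^\<^sub>m (M + 1)) *\<^sub>v u = 0\<^sub>v m"
    if ij: "i < j" "j < n" and M: "of_nat M = weight_eval n (\<lambda>i. lam1 i + lam2 i) (h_root n i j)" for i j M
  proof -
    have ij': "i < n" "i \<noteq> j" "j \<noteq> i" using ij by auto
    have hc: "h_root n i j \<in> cartan n" using h_root_cartan[of i n j] ij by auto
    have Es: "Emat n i j \<in> sl n" "Emat n j i \<in> sl n" using Emat_sl ij' by auto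
    have EF: "sigma (Emat n i j) * sigma (Emat n j i) - sigma (Emat n j i) * sigma (Emat n i j) = sigma (h_root n i j)"
      using sb[OF Es] Emat_comm[of i n j] ij by auto
    have "sigma (h_root n i j) * sigma (Emat n j i) - sigma (Emat n j i) * sigma (h_root n i j)
        = sigma (h_root n i j * Emat n j i - Emat n j i * h_root n i j)"
      using sb[OF cartan_sl[OF hc] Es(2)] .
    also have "h_root n i j * Emat n j i - Emat n j i * h_root n i j = (-2) \<cdot>\<^sub>m Emat n j i"
      using cartan_Emat[OF hc, of j i] h_root_idx[of i n j] ij by simp
    also have "sigma \<dots> = (-2) \<cdot>\<^sub>m sigma (Emat n j i)" using sl_rep_smult[OF sr Es(2)] .
    finally have HF: "sigma (h_root n i j) * sigma (Emat n j i) - sigma (Emat n j i) * sigma (h_root n i j) = (-2) \<cdot>\<^sub>m sigma (Emat n j i)" .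
    have Eu: "sigma (Emat n i j) *\<^sub>v u = 0\<^sub>v m" using un Emat_npos[OF ij(1)] by auto
    have Hu: "sigma (h_root n i j) *\<^sub>v u = of_nat M \<cdot>\<^sub>v u" using uh hc M by auto
    have "(sigma (Emat n j i) ^\<^sub>m (M+1)) *\<^sub>v u = 0\<^sub>v m"
      by (rule sl2_lemma[OF sc[OF Es(1)] sc[OF Es(2)] sc[OF cartan_sl[OF hc]] EF HF u Eu Hu])
    then show ?thesis by (simp add: ev_def f_root_def)
  qed
  show ?thesis unfolding F_rels_def
  proof (intro conjI ballI allI impI)
    show "u \<in> carrier_vec m" using u by simp
  next
    fix x k assume "x \<in> npos n" then show "ev sigma m x k *\<^sub>v u = 0\<^sub>v m" using un z by (auto simp: ev_def)
  next
    fix h and k :: nat assume "h \<in> cartan n" "1 \<le> k" then show "ev sigma m h k *\<^sub>v u = 0\<^sub>v m" using z by (auto simp: ev_def)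
  next
    fix x and k :: nat assume "x \<in> nneg n \<inter> sl n" "2 \<le> k" then show "ev sigma m x k *\<^sub>v u = 0\<^sub>v m" using z by (auto simp: ev_def)
  next
    fix h assume "h \<in> cartan n" then show "ev sigma m h 0 *\<^sub>v u = weight_eval n (\<lambda>i. lam1 i + lam2 i) h \<cdot>\<^sub>v u"
      using uh by (auto simp: ev_def)
  next
    fix i j and M :: nat assume "i < j \<and> j < n \<and> of_nat M = weight_eval n (\<lambda>i. lam1 i + lam2 i) (h_root n i j)"
    then show "ev sigma m (f_root n i j) 0 ^\<^sub>m (M + 1) *\<^sub>v u = 0\<^sub>v m" using f0 by blast
  next
    fix i j and m1 m2 :: nat
    show "ev sigma m (f_root n i j) 1 ^\<^sub>m (min m1 m2 + 1) *\<^sub>v u = 0\<^sub>v m"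
      using z zero_pow_mat[of m "min m1 m2"] by (simp add: ev_def)
  qed
qed


lemma key_lemma:
  assumes r: "current_rep n d rho" and hw: "hwv n d rho v lam"
    and span: "vspan d (fst ` Mon n rho v) = carrier_vec d"
    and sr: "sl_rep n m sigma" and irr: "is_simple_hw n tau m sigma"
    and u: "u \<in> carrier_vec m" "eigv n sigma u (weight_eval n tau)"
    and psi: "\<psi> \<in> hom_sl n d rho m sigma" and nz: "\<psi> \<noteq> 0\<^sub>m m d"
    and g: "g \<in> carrier_vec m" "eigv n sigma g (weight_eval n tau)"
    and good: "\<And>w c. (w, c) \<in> Mon n rho v \<Longrightarrow> \<forall>h\<in>cartan n. weight_eval n lam h - alpha_sum n c h = weight_eval n tau h
                 \<Longrightarrow> \<exists>b. \<psi> *\<^sub>v w = b \<cdot>\<^sub>v g"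
  shows "\<exists>a. u = a \<cdot>\<^sub>v g"
proof -
  have pc: "\<psi> \<in> carrier_mat m d" using psi unfolding hom_sl_def by auto
  have v: "v \<in> carrier_vec d" using hw by (simp add: hwv_def)
  have Mc: "fst ` Mon n rho v \<subseteq> carrier_vec d" using Mon_carrier[OF r v] by auto
  have Hc: "\<And>h. h \<in> cartan n \<Longrightarrow> sigma h \<in> carrier_mat m m" using sr cartan_sl unfolding sl_rep_def by auto
  obtain x where x: "x \<in> carrier_vec d" "u = \<psi> *\<^sub>v x" using hom_image_all[OF irr r psi nz u(1)] by auto
  have "x \<in> vspan d (fst ` Mon n rho v)" using span x by simp
  then obtain ts where ts: "set (map snd ts) \<subseteq> Mon n rho v" "x = vsum d (map (\<lambda>(a,p). a \<cdot>\<^sub>v fst p) ts)"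
    using vspan_list[OF Mc] by blast
  have xsc: "set (map (\<lambda>(a,p). a \<cdot>\<^sub>v fst p) ts) \<subseteq> carrier_vec d" using ts(1) Mc by force
  define ys where "ys = map (\<lambda>(a,p). (\<psi> *\<^sub>v (a \<cdot>\<^sub>v fst p), \<lambda>h. weight_eval n lam h - alpha_sum n (snd p) h)) ts"
  have ueq: "u = vsum m (map fst ys)"
    unfolding x(2) ts(2) mat_vsum[OF pc xsc] ys_def by (simp add: o_def case_prod_beta)
  have ok: "\<forall>q\<in>set ys. okitem n m sigma (weight_eval n tau) g q"
  proof
    fix q assume "q \<in> set ys"
    then obtain a w c where q: "q = (\<psi> *\<^sub>v (a \<cdot>\<^sub>v w), \<lambda>h. weight_eval n lam h - alpha_sum n c h)"
      and wc: "(w, c) \<in> Mon n rho v"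
      unfolding ys_def using ts(1) by force
    have wcar: "w \<in> carrier_vec d" using Mon_carrier[OF r v wc] .
    have e: "\<psi> *\<^sub>v (a \<cdot>\<^sub>v w) = a \<cdot>\<^sub>v (\<psi> *\<^sub>v w)" using mult_mat_vec[OF pc wcar] .
    have pw: "\<psi> *\<^sub>v w \<in> carrier_vec m" using pc wcar by simp
    have eg: "eigv n sigma (\<psi> *\<^sub>v (a \<cdot>\<^sub>v w)) (\<lambda>h. weight_eval n lam h - alpha_sum n c h)"
      unfolding e by (rule eigv_smult[OF Hc pw hom_eigv[OF r hw wc psi sr]])
    have disj: "(\<exists>h\<in>cartan n. weight_eval n lam h - alpha_sum n c h \<noteq> weight_eval n tau h) \<or>
        (\<exists>a'. \<psi> *\<^sub>v (a \<cdot>\<^sub>v w) = a' \<cdot>\<^sub>v g \<and> (\<forall>h\<in>cartan n. weight_eval n lam h - alpha_sum n c h = weight_eval n tau h))"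
    proof (cases "\<forall>h\<in>cartan n. weight_eval n lam h - alpha_sum n c h = weight_eval n tau h")
      case True
      then obtain b where b: "\<psi> *\<^sub>v w = b \<cdot>\<^sub>v g" using good[OF wc] by blast
      have "\<psi> *\<^sub>v (a \<cdot>\<^sub>v w) = (a * b) \<cdot>\<^sub>v g" unfolding e b by (simp add: smult_smult_assoc)
      then show ?thesis using True by blast
    qed auto
    show "okitem n m sigma (weight_eval n tau) g q"
      unfolding okitem_def q using eg disj pc wcar by auto
  qed
  show ?thesis by (rule eig_sum[OF Hc g ok ueq u(2)])
qed


theorem corollary3p3:
  fixes n d :: nat and rho :: "complex mat \<Rightarrow> nat \<Rightarrow> complex mat" and v :: "complex vec"
    and lam1 lam2 :: "nat \<Rightarrow> nat"
  assumes "n \<ge> 2"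
    and "is_F n lam1 lam2 d rho v"
  shows "(\<forall>m sigma. is_simple_hw n (\<lambda>i. lam1 i + lam2 i) m sigma \<longrightarrow>
            mat_dim m d (hom_sl n d rho m sigma) = 1)
       \<and> (\<forall>tau m sigma. \<not> weight_le n tau (\<lambda>i. lam1 i + lam2 i) \<longrightarrow> is_simple_hw n tau m sigma \<longrightarrow>
            mat_dim m d (hom_sl n d rho m sigma) = 0)"
proof -
  define lam where "lam = (\<lambda>i. lam1 i + lam2 i)"
  have r: "current_rep n d rho" and fr: "F_rels n lam1 lam2 d rho v"
    and gen: "\<And>W. lin_subspace d W \<Longrightarrow> v \<in> W \<Longrightarrow> (\<forall>x\<in>sl n. \<forall>k. \<forall>u\<in>W. rho x k *\<^sub>v u \<in> W) \<Longrightarrow> W = carrier_vec d"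
    and univ: "\<And>d' rho' w. current_rep n d' rho' \<Longrightarrow> F_rels n lam1 lam2 d' rho' w \<Longrightarrow>
        (\<exists>\<phi>\<in>carrier_mat d' d. (\<forall>x\<in>sl n. \<forall>k. \<phi> * rho x k = rho' x k * \<phi>) \<and> \<phi> *\<^sub>v v = w)"
    using assms(2) unfolding is_F_def by blast+
  have hw: "hwv n d rho v lam" using fr unfolding F_rels_def hwv_def lam_def by auto
  have v: "v \<in> carrier_vec d" using hw by (simp add: hwv_def)
  have Mc: "fst ` Mon n rho v \<subseteq> carrier_vec d" using Mon_carrier[OF r v] by auto
  have vin: "v \<in> vspan d (fst ` Mon n rho v)" by (rule vspan.gen) (use Mon.base in force)
  have span: "vspan d (fst ` Mon n rho v) = carrier_vec d"
  proof (rule gen)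
    show "lin_subspace d (vspan d (fst ` Mon n rho v))"
      unfolding lin_subspace_def
      using vspan_carrier[OF Mc] vspan.zero vspan_add[OF Mc] vspan_smult[OF Mc] by blast
    show "v \<in> vspan d (fst ` Mon n rho v)" by (rule vin)
    show "\<forall>x\<in>sl n. \<forall>k. \<forall>u\<in>vspan d (fst ` Mon n rho v). rho x k *\<^sub>v u \<in> vspan d (fst ` Mon n rho v)"
    proof (intro ballI allI)
      fix x k u assume x: "x \<in> sl n" and u: "u \<in> vspan d (fst ` Mon n rho v)"
      show "rho x k *\<^sub>v u \<in> vspan d (fst ` Mon n rho v)"
      proof (rule vspan_mat[OF rep_carrier[OF r x] Mc Mc _ u])
        fix s assume "s \<in> fst ` Mon n rho v"
        then obtain c where "(s, c) \<in> Mon n rho v" by auto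
        then show "rho x k *\<^sub>v s \<in> vspan d (fst ` Mon n rho v)" using Mon_invariant[OF r hw _ x] by blast
      qed
    qed
  qed
  have part2: "mat_dim m d (hom_sl n d rho m sigma) = 0"
    if nle: "\<not> weight_le n tau lam" and irr: "is_simple_hw n tau m sigma" for tau m sigma
  proof -
    have sr: "sl_rep n m sigma" using irr unfolding is_simple_hw_def by auto
    obtain u where u: "u \<in> carrier_vec m" "u \<noteq> 0\<^sub>v m" "\<forall>h\<in>cartan n. sigma h *\<^sub>v u = weight_eval n tau h \<cdot>\<^sub>v u"
      using irr unfolding is_simple_hw_def by blast
    have ue: "eigv n sigma u (weight_eval n tau)" using u unfolding eigv_def by auto
    have z: "\<psi> = 0\<^sub>m m d" if psi: "\<psi> \<in> hom_sl n d rho m sigma" for \<psi>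
    proof (rule ccontr)
      assume nz: "\<psi> \<noteq> 0\<^sub>m m d"
      have g2: "eigv n sigma (0\<^sub>v m) (weight_eval n tau)"
        unfolding eigv_def
      proof
        fix h assume h: "h \<in> cartan n"
        have "sigma h \<in> carrier_mat m m" using sr cartan_sl[OF h] unfolding sl_rep_def by auto
        then show "sigma h *\<^sub>v 0\<^sub>v m = weight_eval n tau h \<cdot>\<^sub>v 0\<^sub>v m" by (intro eq_vecI) auto
      qed
      have g: "0\<^sub>v m \<in> carrier_vec m" "eigv n sigma (0\<^sub>v m) (weight_eval n tau)" using g2 by auto
      have "\<exists>a. u = a \<cdot>\<^sub>v 0\<^sub>v m"
      proof (rule key_lemma[OF r hw span sr irr u(1) ue psi nz g])
        fix w c assume "(w, c) \<in> Mon n rho v" and eq: "\<forall>h\<in>cartan n. weight_eval n lam h - alpha_sum n c h = weight_eval n tau h"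
        have "weight_le n tau lam" unfolding weight_le_def
        proof (intro exI[of _ c] ballI)
          fix h assume "h \<in> cartan n"
          then have "weight_eval n lam h - alpha_sum n c h = weight_eval n tau h" using eq by auto
          then show "weight_eval n lam h - weight_eval n tau h = (\<Sum>i<n - 1. of_nat (c i) * (h $$ (i, i) - h $$ (i + 1, i + 1)))"
            unfolding alpha_sum_def by (simp add: algebra_simps)
        qed
        then show "\<exists>b. \<psi> *\<^sub>v w = b \<cdot>\<^sub>v 0\<^sub>v m" using nle by blast
      qed
      then show False using u(1,2) by auto
    qed
    have "(LEAST k. \<exists>B. length B = k \<and> set B \<subseteq> hom_sl n d rho m sigma \<and>
      (\<forall>s\<in>hom_sl n d rho m sigma. \<exists>cs. length cs = length B \<and> s = mat_lincomb m d cs B)) = 0"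
      by (rule Least_eq_0) (auto simp: mat_lincomb_def z intro!: exI[of _ "[]"])
    then show ?thesis unfolding mat_dim_def .
  qed
  have part1: "mat_dim m d (hom_sl n d rho m sigma) = 1"
    if irr: "is_simple_hw n lam m sigma" for m sigma
  proof -
    have sr: "sl_rep n m sigma" using irr unfolding is_simple_hw_def by auto
    have sc: "\<And>x. x \<in> sl n \<Longrightarrow> sigma x \<in> carrier_mat m m" using sr unfolding sl_rep_def by auto
    obtain u where u: "u \<in> carrier_vec m" "u \<noteq> 0\<^sub>v m" "\<forall>x\<in>npos n. sigma x *\<^sub>v u = 0\<^sub>v m"
      "\<forall>h\<in>cartan n. sigma h *\<^sub>v u = weight_eval n lam h \<cdot>\<^sub>v u"
      using irr unfolding is_simple_hw_def by blast
    have ue: "eigv n sigma u (weight_eval n lam)" using u unfolding eigv_def by auto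
    have "F_rels n lam1 lam2 m (ev sigma m) u"
      by (rule ev_F_rels[OF sr u(1,2,3)]) (use u(4) in \<open>simp add: lam_def\<close>)
    then obtain \<phi> where \<phi>: "\<phi> \<in> carrier_mat m d" "\<forall>x\<in>sl n. \<forall>k. \<phi> * rho x k = ev sigma m x k * \<phi>" "\<phi> *\<^sub>v v = u"
      using univ[OF ev_current_rep[OF sr]] by blast
    have \<phi>h: "\<phi> \<in> hom_sl n d rho m sigma" unfolding hom_sl_def using \<phi>(1,2) by (auto simp: ev_def)
    have \<phi>nz: "\<phi> \<noteq> 0\<^sub>m m d" using \<phi>(3) u(2) v by auto
    have A: "\<exists>a. u = a \<cdot>\<^sub>v (\<psi> *\<^sub>v v)" if psi: "\<psi> \<in> hom_sl n d rho m sigma" and nz: "\<psi> \<noteq> 0\<^sub>m m d" for \<psi>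
    proof -
      have pc: "\<psi> \<in> carrier_mat m d" using psi unfolding hom_sl_def by auto
      have gc: "\<psi> *\<^sub>v v \<in> carrier_vec m" using pc v by simp
      have ge: "eigv n sigma (\<psi> *\<^sub>v v) (weight_eval n lam)"
        using hom_eigv[OF r hw Mon.base psi sr] by (simp add: alpha_sum_def)
      show ?thesis
      proof (rule key_lemma[OF r hw span sr irr u(1) ue psi nz gc ge])
        fix w c assume wc: "(w, c) \<in> Mon n rho v" and eq: "\<forall>h\<in>cartan n. weight_eval n lam h - alpha_sum n c h = weight_eval n lam h"
        have "\<forall>h\<in>cartan n. alpha_sum n c h = 0" using eq by auto
        then have "w = v" by (rule good_is_base[OF wc])
        then show "\<exists>b. \<psi> *\<^sub>v w = b \<cdot>\<^sub>v (\<psi> *\<^sub>v v)" using gc by (intro exI[of _ 1]) auto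
      qed
    qed
    have B: "\<exists>a. \<psi> = a \<cdot>\<^sub>m \<phi>" if psi: "\<psi> \<in> hom_sl n d rho m sigma" for \<psi>
    proof (cases "\<psi> = 0\<^sub>m m d")
      case True
      then have "\<psi> = 0 \<cdot>\<^sub>m \<phi>" using \<phi>(1) by (intro eq_matI) auto
      then show ?thesis by blast
    next
      case False
      have pc: "\<psi> \<in> carrier_mat m d" and pe: "\<And>x. x \<in> sl n \<Longrightarrow> \<psi> * rho x 0 = sigma x * \<psi>"
        using psi unfolding hom_sl_def by auto
      obtain a where a: "u = a \<cdot>\<^sub>v (\<psi> *\<^sub>v v)" using A[OF psi False] by blast
      have a0: "a \<noteq> 0" using a u(2) pc v by auto
      define \<chi> where "\<chi> = \<phi> - a \<cdot>\<^sub>m \<psi>"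
      have \<chi>c: "\<chi> \<in> carrier_mat m d" unfolding \<chi>_def using \<phi>(1) pc by auto
      have \<chi>h: "\<chi> \<in> hom_sl n d rho m sigma"
        unfolding hom_sl_def
      proof (intro CollectI conjI ballI)
        show "\<chi> \<in> carrier_mat m d" by (rule \<chi>c)
        fix x assume x: "x \<in> sl n"
        have rc: "rho x 0 \<in> carrier_mat d d" using rep_carrier[OF r x] .
        have "\<chi> * rho x 0 = \<phi> * rho x 0 - (a \<cdot>\<^sub>m \<psi>) * rho x 0"
          unfolding \<chi>_def using \<phi>(1) pc rc by (intro minus_mult_distrib_mat) auto
        also have "\<dots> = sigma x * \<phi> - a \<cdot>\<^sub>m (sigma x * \<psi>)"
          using \<phi>(2) x pe[OF x] mult_smult_assoc_mat[OF pc rc] by (simp add: ev_def)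
        also have "\<dots> = sigma x * \<phi> - sigma x * (a \<cdot>\<^sub>m \<psi>)"
          using mult_smult_distrib[OF sc[OF x] pc] by simp
        also have "\<dots> = sigma x * \<chi>"
          unfolding \<chi>_def using \<phi>(1) pc sc[OF x] by (intro mult_minus_distrib_mat[symmetric]) auto
        finally show "\<chi> * rho x 0 = sigma x * \<chi>" .
      qed
      have "\<chi> *\<^sub>v v = \<phi> *\<^sub>v v - (a \<cdot>\<^sub>m \<psi>) *\<^sub>v v"
        unfolding \<chi>_def using \<phi>(1) pc v by (intro minus_mult_distrib_mat_vec) auto
      also have "\<dots> = 0\<^sub>v m" unfolding \<phi>(3) a smult_mat_mult_vec[OF pc v]
        using pc v by (intro eq_vecI) auto
      finally have \<chi>v: "\<chi> *\<^sub>v v = 0\<^sub>v m" .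
      have "\<chi> = 0\<^sub>m m d"
      proof (rule ccontr)
        assume "\<chi> \<noteq> 0\<^sub>m m d"
        then obtain b where "u = b \<cdot>\<^sub>v (\<chi> *\<^sub>v v)" using A[OF \<chi>h] by blast
        then show False using \<chi>v u(2) by auto
      qed
      then have "\<psi> = (1 / a) \<cdot>\<^sub>m \<phi>"
      proof -
        assume "\<chi> = 0\<^sub>m m d"
        show ?thesis
        proof (rule eq_matI)
          fix i j assume ij: "i < dim_row ((1 / a) \<cdot>\<^sub>m \<phi>)" "j < dim_col ((1 / a) \<cdot>\<^sub>m \<phi>)"
          then have "\<chi> $$ (i,j) = 0" using \<open>\<chi> = 0\<^sub>m m d\<close> \<phi>(1) by auto
          then have "\<phi> $$ (i,j) = a * \<psi> $$ (i,j)" unfolding \<chi>_def using ij \<phi>(1) pc by auto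
          then show "\<psi> $$ (i,j) = ((1 / a) \<cdot>\<^sub>m \<phi>) $$ (i,j)" using ij a0 by (simp add: field_simps)
        qed (use pc \<phi>(1) in auto)
      qed
      then show ?thesis by blast
    qed
    define P where "P = (\<lambda>k. \<exists>B. length B = k \<and> set B \<subseteq> hom_sl n d rho m sigma \<and>
      (\<forall>s\<in>hom_sl n d rho m sigma. \<exists>cs. length cs = length B \<and> s = mat_lincomb m d cs B))"
    have P1: "P 1" unfolding P_def
    proof (intro exI[of _ "[\<phi>]"] conjI ballI)
      fix s assume "s \<in> hom_sl n d rho m sigma"
      then obtain a where a: "s = a \<cdot>\<^sub>m \<phi>" using B by blast
      have "mat_lincomb m d [a] [\<phi>] = a \<cdot>\<^sub>m \<phi>" unfolding mat_lincomb_def using \<phi>(1) by (intro eq_matI) auto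
      then show "\<exists>cs. length cs = length [\<phi>] \<and> s = mat_lincomb m d cs [\<phi>]" using a by (intro exI[of _ "[a]"]) auto
    qed (use \<phi>h in auto)
    have nP0: "\<not> P 0"
    proof
      assume "P 0"
      then have "\<phi> = mat_lincomb m d [] []" unfolding P_def using \<phi>h by auto
      then show False using \<phi>nz by (simp add: mat_lincomb_def)
    qed
    have "(LEAST k. P k) = 1"
    proof (rule Least_equality[where P=P and x=1, OF P1])
      fix k assume "P k" then show "1 \<le> k" using nP0 by (cases k) auto
    qed
    then show ?thesis unfolding mat_dim_def P_def .
  qed
  show ?thesis using part1 part2 unfolding lam_def by blast
qed


end
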